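(* Let $\Omega\subset\mathbb R^n$ be a quasi-homogeneous properly convex affine domain. Then $\Omega$ is strictly convex if and only if its asymptotic cone $\mathrm{AC}(\Omega)$ is one-dimensional.
   Context: An affine domain is a connected open subset $\Omega\subset\mathbb R^n$; it is quasi-homogeneous if there are a compact $K\subset\Omega$ and a subgroup $G$ of the group $\mathrm{Aut}_{\mathrm{aff}}(\Omega)$ of affine transformations preserving $\Omega$ with $GK=\Omega$. A convex affine domain is properly convex if it contains no complete affine line; it is strictly convex if its boundary in $\mathbb R^n$ contains no nondegenerate line segment. The asymptotic cone is $\mathrm{AC}(\Omega)=\{u\in\mathbb R^n\mid x+tu\in\Omega \text{ for all } x\in\Omega,\ t\ge 0\}$, and its dimension is that of its linear span. *)

theory Defs
  imports "HOL-Analysis.Analysis"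
begin

definition affine_domain :: "'a::euclidean_space set \<Rightarrow> bool" where
  "affine_domain \<Omega> \<longleftrightarrow> open \<Omega> \<and> connected \<Omega> \<and> \<Omega> \<noteq> {}"

definition affine_transformation :: "('a::euclidean_space \<Rightarrow> 'a) \<Rightarrow> bool" where
  "affine_transformation f \<longleftrightarrow> (\<exists>L b. linear L \<and> bij L \<and> (\<forall>x. f x = L x + b))"

definition Aut_aff :: "'a::euclidean_space set \<Rightarrow> ('a \<Rightarrow> 'a) set" where
  "Aut_aff \<Omega> = {f. affine_transformation f \<and> f ` \<Omega> = \<Omega>}"

definition aff_subgroup :: "('a::euclidean_space \<Rightarrow> 'a) set \<Rightarrow> 'a set \<Rightarrow> bool" where
  "aff_subgroup G \<Omega> \<longleftrightarrow> G \<subseteq> Aut_aff \<Omega> \<and> id \<in> G \<and>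
     (\<forall>f\<in>G. \<forall>g\<in>G. f \<circ> g \<in> G) \<and> (\<forall>f\<in>G. inv f \<in> G)"

definition quasi_homogeneous :: "'a::euclidean_space set \<Rightarrow> bool" where
  "quasi_homogeneous \<Omega> \<longleftrightarrow>
     (\<exists>K G. compact K \<and> K \<subseteq> \<Omega> \<and> aff_subgroup G \<Omega> \<and> (\<Union>g\<in>G. g ` K) = \<Omega>)"

definition properly_convex :: "'a::euclidean_space set \<Rightarrow> bool" where
  "properly_convex \<Omega> \<longleftrightarrow> convex \<Omega> \<and>
     \<not> (\<exists>x v. v \<noteq> 0 \<and> (\<forall>t::real. x + t *\<^sub>R v \<in> \<Omega>))"

definition strictly_convex :: "'a::euclidean_space set \<Rightarrow> bool" where
  "strictly_convex \<Omega> \<longleftrightarrow> convex \<Omega> \<and>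
     \<not> (\<exists>a b. a \<noteq> b \<and> closed_segment a b \<subseteq> frontier \<Omega>)"

definition asymptotic_cone :: "'a::euclidean_space set \<Rightarrow> 'a set" where
  "asymptotic_cone \<Omega> = {u. \<forall>x\<in>\<Omega>. \<forall>t::real. t \<ge> 0 \<longrightarrow> x + t *\<^sub>R u \<in> \<Omega>}"

end

theory Submission
  imports Defs
begin

locale qh =
  fixes Om :: "'a::euclidean_space set" and K :: "'a set" and G :: "('a \<Rightarrow> 'a) set"
  assumes opn: "open Om" and cvx: "convex Om" and nonempty: "Om \<noteq> {}"
    and noline: "\<And>x v. v \<noteq> 0 \<Longrightarrow> \<exists>t. x + t *\<^sub>R v \<notin> Om"
    and cK: "compact K" and KOm: "K \<subseteq> Om"
    and GA: "G \<subseteq> Aut_aff Om"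
    and cover: "\<And>x. x \<in> Om \<Longrightarrow> \<exists>g\<in>G. \<exists>y\<in>K. x = g y"
begin

abbreviation "AC \<equiv> asymptotic_cone Om"

lemma cl_convex: "convex (closure Om)"
  by (simp add: convex_closure cvx)

lemma int_Om: "interior Om = Om"
  using opn by (simp add: interior_open)

lemma shrink:
  assumes "z \<in> Om" "c \<in> closure Om" "0 < l" "l \<le> 1"
  shows "c + l *\<^sub>R (z - c) \<in> Om"
proof -
  have "c - l *\<^sub>R (c - z) \<in> interior Om"
    using mem_interior_closure_convex_shrink[OF cvx _ assms(2,3,4), of z] assms(1) int_Om by simp
  moreover have "c - l *\<^sub>R (c - z) = c + l *\<^sub>R (z - c)" by (simp add: algebra_simps)
  ultimately show ?thesis using int_Om by simp
qed

lemma seg_Om: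
  assumes "z \<in> Om" "c \<in> closure Om" "0 \<le> th" "th < 1"
  shows "z + th *\<^sub>R (c - z) \<in> Om"
proof -
  have "c + (1 - th) *\<^sub>R (z - c) \<in> Om" using shrink[OF assms(1,2)] assms(3,4) by simp
  moreover have "c + (1 - th) *\<^sub>R (z - c) = z + th *\<^sub>R (c - z)" by (simp add: algebra_simps)
  ultimately show ?thesis by simp
qed

lemma seg_cl:
  assumes "a \<in> closure Om" "b \<in> closure Om" "0 \<le> th" "th \<le> 1"
  shows "a + th *\<^sub>R (b - a) \<in> closure Om"
proof -
  have "(1 - th) *\<^sub>R a + th *\<^sub>R b \<in> closure Om"
    using convexD[OF cl_convex assms(1,2)] assms(3,4) by simp
  moreover have "(1 - th) *\<^sub>R a + th *\<^sub>R b = a + th *\<^sub>R (b - a)" by (simp add: algebra_simps)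
  ultimately show ?thesis by simp
qed

lemma seg_Om2:
  assumes "a \<in> Om" "b \<in> Om" "0 \<le> th" "th \<le> 1"
  shows "a + th *\<^sub>R (b - a) \<in> Om"
proof -
  have "(1 - th) *\<^sub>R a + th *\<^sub>R b \<in> Om"
    using convexD[OF cvx assms(1,2)] assms(3,4) by simp
  moreover have "(1 - th) *\<^sub>R a + th *\<^sub>R b = a + th *\<^sub>R (b - a)" by (simp add: algebra_simps)
  ultimately show ?thesis by simp
qed

lemma AC_D: "w \<in> AC \<Longrightarrow> x \<in> Om \<Longrightarrow> 0 \<le> t \<Longrightarrow> x + t *\<^sub>R w \<in> Om"
  by (simp add: asymptotic_cone_def)

lemma AC_D1: "w \<in> AC \<Longrightarrow> x \<in> Om \<Longrightarrow> x + w \<in> Om"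
  using AC_D[of w x 1] by simp

lemma AC_scale: "w \<in> AC \<Longrightarrow> 0 \<le> s \<Longrightarrow> s *\<^sub>R w \<in> AC"
  by (simp add: asymptotic_cone_def)

lemma AC_add: "v \<in> AC \<Longrightarrow> w \<in> AC \<Longrightarrow> v + w \<in> AC"
proof -
  assume v: "v \<in> AC" and w: "w \<in> AC"
  show ?thesis unfolding asymptotic_cone_def
  proof (intro CollectI ballI allI impI)
    fix x t assume x: "x \<in> Om" and t: "(0::real) \<le> t"
    have "x + t *\<^sub>R v \<in> Om" using AC_D[OF v x t] .
    then have "(x + t *\<^sub>R v) + t *\<^sub>R w \<in> Om" using AC_D[OF w _ t] by blast
    then show "x + t *\<^sub>R (v + w) \<in> Om" by (simp add: algebra_simps)
  qed
qed

lemma AC_cl: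
  assumes w: "w \<in> AC" and x: "x \<in> closure Om" and t: "0 \<le> t"
  shows "x + t *\<^sub>R w \<in> closure Om"
proof -
  have sub: "(+) (t *\<^sub>R w) ` Om \<subseteq> Om" using AC_D[OF w _ t] by (auto simp: add.commute)
  have "(+) (t *\<^sub>R w) ` closure Om = closure ((+) (t *\<^sub>R w) ` Om)"
    by (simp add: closure_translation)
  also have "\<dots> \<subseteq> closure Om" using sub closure_mono by blast
  finally show ?thesis using x by (auto simp: add.commute)
qed

lemma L_rec:
  assumes x0: "x0 \<in> Om" and ray: "\<And>t. 0 \<le> t \<Longrightarrow> x0 + t *\<^sub>R w \<in> closure Om"
  shows "w \<in> AC"
  unfolding asymptotic_cone_def
proof (intro CollectI ballI allI impI)
  fix x t assume x: "x \<in> Om" and t: "(0::real) \<le> t"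
  obtain e where e: "e > 0" "ball x e \<subseteq> Om" using opn x open_contains_ball by blast
  define eta where "eta = e / (norm (x - x0) + 1)"
  have "norm (x - x0) + 1 > 0" by (simp add: add_nonneg_pos)
  then have eta: "eta > 0" using e by (simp add: eta_def)
  have "norm (eta *\<^sub>R (x - x0)) < e"
  proof -
    have "norm (eta *\<^sub>R (x - x0)) = eta * norm (x - x0)" using eta by simp
    also have "\<dots> < eta * (norm (x - x0) + 1)" using eta by simp
    also have "\<dots> = e" unfolding eta_def using \<open>norm (x - x0) + 1 > 0\<close> by simp
    finally show ?thesis .
  qed
  then have z: "x + eta *\<^sub>R (x - x0) \<in> Om" using e by (auto simp: dist_norm)
  define c where "c = x0 + (((1 + eta) / eta) * t) *\<^sub>R w"
  have c: "c \<in> closure Om" unfolding c_def using ray eta t by simp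
  define l where "l = 1 / (1 + eta)"
  have l: "0 < l" "l \<le> 1" using eta by (auto simp: l_def)
  have "c + l *\<^sub>R ((x + eta *\<^sub>R (x - x0)) - c) \<in> Om" using shrink[OF z c l] .
  moreover have "c + l *\<^sub>R ((x + eta *\<^sub>R (x - x0)) - c) = x + t *\<^sub>R w"
  proof -
    have "c + l *\<^sub>R ((x + eta *\<^sub>R (x - x0)) - c) = (1 - l) *\<^sub>R c + l *\<^sub>R (x + eta *\<^sub>R (x - x0))"
      by (simp add: algebra_simps)
    also have "1 - l = eta / (1 + eta)" using eta by (simp add: l_def field_simps)
    finally have "c + l *\<^sub>R ((x + eta *\<^sub>R (x - x0)) - c) = (eta / (1 + eta)) *\<^sub>R c + l *\<^sub>R (x + eta *\<^sub>R (x - x0))" .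
    also have "\<dots> = x + t *\<^sub>R w"
    proof -
      have "eta + eta * eta > 0" using eta by (simp add: add_pos_pos)
      then have f0: "(eta / (1 + eta)) * ((1 + eta) / eta) = 1" using eta by (simp add: field_simps)
      have f1: "(eta / (1 + eta)) * (((1 + eta) / eta) * t) = t" using f0 by (metis mult.assoc mult_1)
      have f2: "(eta / (1 + eta)) + l = 1" using eta by (simp add: l_def field_simps)
      have "(eta / (1 + eta)) *\<^sub>R c = (eta / (1 + eta)) *\<^sub>R x0 + t *\<^sub>R w"
        unfolding c_def by (simp only: scaleR_add_right scaleR_scaleR f1)
      moreover have "l *\<^sub>R (x + eta *\<^sub>R (x - x0)) = l *\<^sub>R x + (l * eta) *\<^sub>R x - (l * eta) *\<^sub>R x0"
        by (simp add: algebra_simps)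
      moreover have "l * eta = eta / (1 + eta)" by (simp add: l_def)
      moreover have "l *\<^sub>R x + (eta / (1 + eta)) *\<^sub>R x = x" using f2
        by (metis add.commute scaleR_add_left scaleR_one)
      ultimately show ?thesis by (simp add: algebra_simps)
    qed
    finally show ?thesis .
  qed
  ultimately show "x + t *\<^sub>R w \<in> Om" by simp
qed

lemma L_rec':
  assumes p: "p \<in> closure Om" and ray: "\<And>t. 0 \<le> t \<Longrightarrow> p + t *\<^sub>R w \<in> closure Om"
  shows "w \<in> AC"
proof -
  obtain x0 where x0: "x0 \<in> Om" using nonempty by blast
  show ?thesis
  proof (rule L_rec[OF x0])
    fix t :: real assume t: "0 \<le> t"
    show "x0 + t *\<^sub>R w \<in> closure Om" unfolding closure_approachable
    proof (intro allI impI)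
      fix e :: real assume e: "e > 0"
      define l where "l = min (1/2) (e / (2 * (norm (p - x0) + 1)))"
      have "2 * (norm (p - x0) + 1) > 0" by (simp add: add_nonneg_pos)
      then have l: "0 < l" "l \<le> 1/2" using e by (auto simp: l_def min_def)
      have c: "p + (t / l) *\<^sub>R w \<in> closure Om" using ray t l by simp
      have "p + (t / l) *\<^sub>R w + (1 - l) *\<^sub>R (x0 - (p + (t / l) *\<^sub>R w)) \<in> Om"
        using shrink[OF x0 c, of "1 - l"] l by simp
      moreover have "p + (t / l) *\<^sub>R w + (1 - l) *\<^sub>R (x0 - (p + (t / l) *\<^sub>R w)) = x0 + t *\<^sub>R w + l *\<^sub>R (p - x0)"
      proof -
        define P where "P = p + (t / l) *\<^sub>R w"
        have "P + (1 - l) *\<^sub>R (x0 - P) = x0 + l *\<^sub>R (P - x0)"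
          by (simp add: algebra_simps)
        moreover have "l *\<^sub>R (P - x0) = l *\<^sub>R (p - x0) + l *\<^sub>R ((t / l) *\<^sub>R w)"
          unfolding P_def by (simp only: scaleR_add_right scaleR_diff_right) (simp add: algebra_simps)
        moreover have "l *\<^sub>R ((t / l) *\<^sub>R w) = t *\<^sub>R w" using l by simp
        ultimately show ?thesis unfolding P_def[symmetric] by (metis (no_types) add.assoc add.commute)
      qed
      moreover have "dist (x0 + t *\<^sub>R w + l *\<^sub>R (p - x0)) (x0 + t *\<^sub>R w) < e"
      proof -
        have "dist (x0 + t *\<^sub>R w + l *\<^sub>R (p - x0)) (x0 + t *\<^sub>R w) = l * norm (p - x0)"
          using l by (simp add: dist_norm)
        also have "\<dots> \<le> (e / (2 * (norm (p - x0) + 1))) * norm (p - x0)"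
          by (rule mult_right_mono) (auto simp: l_def)
        also have "\<dots> < e"
        proof -
          have "(e / (2 * (norm (p - x0) + 1))) * norm (p - x0) = e * (norm (p - x0) / (2 * (norm (p - x0) + 1)))" by simp
          also have "norm (p - x0) / (2 * (norm (p - x0) + 1)) < 1"
            by (subst divide_less_eq_1_pos) (auto simp: add_nonneg_pos)
          then have "e * (norm (p - x0) / (2 * (norm (p - x0) + 1))) < e * 1"
            using e by (intro mult_strict_left_mono) auto
          finally show ?thesis by simp
        qed
        finally show ?thesis .
      qed
      ultimately show "\<exists>y\<in>Om. dist y (x0 + t *\<^sub>R w) < e" by metis
    qed
  qed
qed

lemma AC_closed: "closed AC"
proof -
  have "closure AC \<subseteq> AC"
  proof
    fix w assume w: "w \<in> closure AC"
    obtain x0 where x0: "x0 \<in> Om" using nonempty by blast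
    show "w \<in> AC"
    proof (rule L_rec[OF x0])
      fix t :: real assume t: "0 \<le> t"
      show "x0 + t *\<^sub>R w \<in> closure Om" unfolding closure_approachable
      proof (intro allI impI)
        fix e :: real assume e: "e > 0"
        have "e / (t + 1) > 0" using e t by simp
        then obtain w' where w': "w' \<in> AC" "dist w' w < e / (t + 1)"
          using w unfolding closure_approachable by blast
        have "x0 + t *\<^sub>R w' \<in> Om" using AC_D[OF w'(1) x0 t] .
        moreover have "dist (x0 + t *\<^sub>R w') (x0 + t *\<^sub>R w) < e"
        proof -
          have "dist (x0 + t *\<^sub>R w') (x0 + t *\<^sub>R w) = t * dist w' w"
            using t by (simp add: dist_norm scaleR_diff_right[symmetric])
          also have "\<dots> \<le> (t + 1) * dist w' w" by (simp add: mult_right_mono)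
          also have "\<dots> < (t + 1) * (e / (t + 1))" using w'(2) t by (intro mult_strict_left_mono) auto
          also have "\<dots> = e" using t by simp
          finally show ?thesis .
        qed
        ultimately show "\<exists>y\<in>Om. dist y (x0 + t *\<^sub>R w) < e" by blast
      qed
    qed
  qed
  then show ?thesis using closure_subset_eq by blast
qed

lemma AC_pointed: "w \<in> AC \<Longrightarrow> - w \<in> AC \<Longrightarrow> w = 0"
proof (rule ccontr)
  assume w: "w \<in> AC" and mw: "- w \<in> AC" and nz: "w \<noteq> 0"
  obtain x0 where x0: "x0 \<in> Om" using nonempty by blast
  obtain t where t: "x0 + t *\<^sub>R w \<notin> Om" using noline[OF nz] by blast
  show False
  proof (cases "0 \<le> t")
    case True then show False using AC_D[OF w x0 True] t by simp
  next
    case False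
    then have "x0 + (- t) *\<^sub>R (- w) \<in> Om" using AC_D[OF mw x0, of "-t"] by simp
    then show False using t by simp
  qed
qed

end

context qh begin

lemma ev_subseq:
  assumes "strict_mono r" "eventually P sequentially"
  shows "eventually (\<lambda>n. P (r n)) sequentially"
proof -
  obtain N where N: "\<And>n. n \<ge> N \<Longrightarrow> P n" using assms(2) unfolding eventually_sequentially by blast
  show ?thesis unfolding eventually_sequentially
    using N seq_suble[OF assms(1)] le_trans by blast
qed

lemma extract1:
  fixes f :: "nat \<Rightarrow> 'b::metric_space"
  assumes "compact S" "eventually (\<lambda>n. f n \<in> S) sequentially"
  shows "\<exists>l\<in>S. \<exists>r. strict_mono r \<and> (\<lambda>n. f (r n)) \<longlonglongrightarrow> l"
proof -
  obtain N where N: "\<And>n. n \<ge> N \<Longrightarrow> f n \<in> S" using assms(2) unfolding eventually_sequentially by blast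
  have "\<forall>n. f (n + N) \<in> S" using N by simp
  moreover have "(\<forall>n. (\<lambda>n. f (n + N)) n \<in> S) \<longrightarrow> (\<exists>l\<in>S. \<exists>r::nat\<Rightarrow>nat. strict_mono r \<and> ((\<lambda>n. f (n + N)) \<circ> r) \<longlonglongrightarrow> l)"
    using assms(1) unfolding compact_def by (rule spec)
  ultimately obtain l r where l: "l \<in> S" "strict_mono r" "((\<lambda>n. f (n + N)) \<circ> r) \<longlonglongrightarrow> l"
    by auto
  have "strict_mono (\<lambda>n. r n + N)" using l(2) by (simp add: strict_mono_def)
  moreover have "(\<lambda>n. f (r n + N)) \<longlonglongrightarrow> l" using l(3) by (simp add: o_def)
  ultimately show ?thesis using l(1) by blast
qed

lemma extract3:
  fixes a :: "nat \<Rightarrow> 'b::metric_space" and b :: "nat \<Rightarrow> 'c::metric_space" and c :: "nat \<Rightarrow> 'd::metric_space"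
  assumes "compact S1" "compact S2" "compact S3"
    "eventually (\<lambda>n. a n \<in> S1) sequentially" "eventually (\<lambda>n. b n \<in> S2) sequentially"
    "eventually (\<lambda>n. c n \<in> S3) sequentially"
  shows "\<exists>r la lb lc. strict_mono r \<and> la \<in> S1 \<and> lb \<in> S2 \<and> lc \<in> S3 \<and>
     (\<lambda>n. a (r n)) \<longlonglongrightarrow> la \<and> (\<lambda>n. b (r n)) \<longlonglongrightarrow> lb \<and> (\<lambda>n. c (r n)) \<longlonglongrightarrow> lc"
proof -
  have "compact (S1 \<times> (S2 \<times> S3))" using assms(1-3) by (simp add: compact_Times)
  moreover have "eventually (\<lambda>n. (a n, (b n, c n)) \<in> S1 \<times> (S2 \<times> S3)) sequentially"
    using assms(4-6) by eventually_elim (simp add: mem_Times_iff)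
  ultimately obtain l r where l: "l \<in> S1 \<times> (S2 \<times> S3)" "strict_mono r"
      "(\<lambda>n. (a (r n), (b (r n), c (r n)))) \<longlonglongrightarrow> l"
    using extract1[where f="\<lambda>n. (a n, (b n, c n))" and S="S1 \<times> (S2 \<times> S3)"] by blast
  have "(\<lambda>n. a (r n)) \<longlonglongrightarrow> fst l" using tendsto_fst[OF l(3)] by simp
  moreover have "(\<lambda>n. b (r n)) \<longlonglongrightarrow> fst (snd l)" using tendsto_fst[OF tendsto_snd[OF l(3)]] by simp
  moreover have "(\<lambda>n. c (r n)) \<longlonglongrightarrow> snd (snd l)" using tendsto_snd[OF tendsto_snd[OF l(3)]] by simp
  moreover have "fst l \<in> S1" "fst (snd l) \<in> S2" "snd (snd l) \<in> S3" using l(1) by (auto simp: mem_Times_iff)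
  ultimately show ?thesis using l(2) by blast
qed

lemma lim_in:
  assumes "closed S" "X \<longlonglongrightarrow> l" "eventually (\<lambda>n. X n \<in> S) sequentially"
  shows "l \<in> S"
  using Lim_in_closed_set[OF assms(1) assms(3) _ assms(2)] by simp

lemma lim_notin:
  assumes "X \<longlonglongrightarrow> l" "eventually (\<lambda>n. X n \<notin> Om) sequentially"
  shows "l \<notin> Om"
proof -
  have "closed (- Om)" using opn by (simp add: closed_Compl)
  have "l \<in> - Om" by (rule lim_in[OF \<open>closed (- Om)\<close> assms(1)]) (use assms(2) in simp)
  then show ?thesis by simp
qed

lemma lim_cl:
  assumes "X \<longlonglongrightarrow> l" "eventually (\<lambda>n. X n \<in> closure Om) sequentially"
  shows "l \<in> closure Om"
  using lim_in[OF _ assms] by simp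

lemma pull:
  assumes x: "x \<in> Om"
  shows "\<exists>y\<in>K. \<exists>Li. linear Li \<and> (\<forall>w. x + w \<in> Om \<longleftrightarrow> y + Li w \<in> Om) \<and>
    (\<forall>w. x + w \<in> closure Om \<longleftrightarrow> y + Li w \<in> closure Om) \<and> (\<forall>w\<in>AC. Li w \<in> AC)"
proof -
  obtain g y where g: "g \<in> G" and y: "y \<in> K" and xg: "x = g y" using cover[OF x] by blast
  have gA: "affine_transformation g" and gOm: "g ` Om = Om" using g GA by (auto simp: Aut_aff_def)
  obtain L b where L: "linear L" "bij L" and gL: "\<And>z. g z = L z + b"
    using gA unfolding affine_transformation_def by blast
  have injL: "inj L" using L(2) bij_is_inj by blast
  have surjL: "surj L" using L(2) bij_is_surj by blast
  define Li where "Li = inv L"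
  have Li: "linear Li" unfolding Li_def using inj_linear_imp_inv_linear[OF L(1) injL] .
  have LLi: "\<And>w. L (Li w) = w" unfolding Li_def using surjL by (simp add: surj_f_inv_f)
  have injg: "inj g" using injL unfolding inj_def gL by simp
  have gmem: "\<And>z. g z \<in> Om \<longleftrightarrow> z \<in> Om"
  proof
    fix z assume "g z \<in> Om"
    then have "g z \<in> g ` Om" using gOm by simp
    then show "z \<in> Om" using injg by (auto dest: injD)
  next
    fix z assume "z \<in> Om" then show "g z \<in> Om" using gOm by blast
  qed
  have gimg: "\<And>S. g ` S = (+) b ` (L ` S)" using gL by (auto simp: image_def add.commute)
  have "g ` closure Om = closure (g ` Om)"
    unfolding gimg closure_translation closure_injective_linear_image[OF L(1) injL] ..
  then have gcl0: "g ` closure Om = closure Om" using gOm by simp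
  have gcl: "\<And>z. g z \<in> closure Om \<longleftrightarrow> z \<in> closure Om"
  proof
    fix z assume "g z \<in> closure Om"
    then have "g z \<in> g ` closure Om" using gcl0 by simp
    then show "z \<in> closure Om" using injg by (auto dest: injD)
  next
    fix z assume "z \<in> closure Om" then show "g z \<in> closure Om" using gcl0 by blast
  qed
  have gy: "\<And>w. g (y + Li w) = x + w"
    using gL xg LLi linear_add[OF L(1)] by (simp add: algebra_simps)
  have AC: "\<forall>w\<in>AC. Li w \<in> AC"
  proof
    fix w assume w: "w \<in> AC"
    show "Li w \<in> AC" unfolding asymptotic_cone_def
    proof (intro CollectI ballI allI impI)
      fix z t assume z: "z \<in> Om" and t: "(0::real) \<le> t"
      have "g (z + t *\<^sub>R Li w) = g z + t *\<^sub>R w"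
        using gL linear_add[OF L(1)] linear_scale[OF L(1)] LLi by (simp add: algebra_simps)
      moreover have "g z + t *\<^sub>R w \<in> Om" using AC_D[OF w _ t] gmem z by blast
      ultimately show "z + t *\<^sub>R Li w \<in> Om" using gmem by metis
    qed
  qed
  have m1: "\<forall>w. x + w \<in> Om \<longleftrightarrow> y + Li w \<in> Om"
  proof
    fix w show "x + w \<in> Om \<longleftrightarrow> y + Li w \<in> Om" using gmem[of "y + Li w"] gy[of w] by simp
  qed
  have m2: "\<forall>w. x + w \<in> closure Om \<longleftrightarrow> y + Li w \<in> closure Om"
  proof
    fix w show "x + w \<in> closure Om \<longleftrightarrow> y + Li w \<in> closure Om" using gcl[of "y + Li w"] gy[of w] by simp
  qed
  have P: "linear Li \<and> (\<forall>w. x + w \<in> Om \<longleftrightarrow> y + Li w \<in> Om) \<and>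
    (\<forall>w. x + w \<in> closure Om \<longleftrightarrow> y + Li w \<in> closure Om) \<and> (\<forall>w\<in>AC. Li w \<in> AC)"
    using Li m1 m2 AC by (intro conjI)
  show ?thesis
    apply (rule bexI[OF _ y])
    apply (rule exI[where x=Li])
    apply (rule P)
    done
qed

lemma delta: "\<exists>d>0. \<forall>y\<in>K. \<forall>w. y + w \<notin> Om \<longrightarrow> d \<le> norm w"
proof -
  obtain e where e: "e > 0" "(\<Union>x\<in>K. ball x e) \<subseteq> Om"
    using compact_subset_open_imp_ball_epsilon_subset[OF cK opn KOm] by blast
  have "\<forall>y\<in>K. \<forall>w. y + w \<notin> Om \<longrightarrow> e \<le> norm w"
  proof (intro ballI allI impI)
    fix y w assume y: "y \<in> K" and w: "y + w \<notin> Om"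
    show "e \<le> norm w"
    proof (rule ccontr)
      assume "\<not> e \<le> norm w"
      then have "y + w \<in> ball y e" by (simp add: dist_norm)
      then show False using e(2) y w by blast
    qed
  qed
  then show ?thesis using e(1) by blast
qed

lemma noline_bound: "\<exists>M>0. \<forall>y\<in>K. \<forall>w. y + w \<in> closure Om \<longrightarrow> y - w \<in> closure Om \<longrightarrow> norm w \<le> M"
proof (rule ccontr)
  assume H: "\<not> ?thesis"
  have "\<forall>n::nat. \<exists>y w. y \<in> K \<and> y + w \<in> closure Om \<and> y - w \<in> closure Om \<and> real n + 1 < norm w"
  proof
    fix n :: nat
    have "real n + 1 > 0" by simp
    then have "\<not> (\<forall>y\<in>K. \<forall>w. y + w \<in> closure Om \<longrightarrow> y - w \<in> closure Om \<longrightarrow> norm w \<le> real n + 1)"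
      using H by blast
    then show "\<exists>y w. y \<in> K \<and> y + w \<in> closure Om \<and> y - w \<in> closure Om \<and> real n + 1 < norm w"
      by (auto simp: not_le)
  qed
  then obtain y w where yw: "\<And>n. y n \<in> K" "\<And>n. y n + w n \<in> closure Om" "\<And>n. y n - w n \<in> closure Om"
    "\<And>n. real n + 1 < norm (w n)" by metis
  define d where "d n = (1 / norm (w n)) *\<^sub>R w n" for n
  have wpos: "\<And>n. norm (w n) > 0"
  proof -
    fix n have "real n + 1 > 0" by simp
    then show "norm (w n) > 0" using yw(4)[of n] by linarith
  qed
  have dS: "\<And>n. d n \<in> sphere 0 1" using wpos by (simp add: d_def)
  obtain r y0 d0 where R: "strict_mono r" "y0 \<in> K" "d0 \<in> sphere 0 1" "(\<lambda>n. y (r n)) \<longlonglongrightarrow> y0"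
    "(\<lambda>n. d (r n)) \<longlonglongrightarrow> d0"
    using extract3[OF cK compact_sphere[of 0 1] compact_sphere[of 0 1], where a=y and b=d and c=d] yw(1) dS by auto
  have y0: "y0 \<in> Om" using R(2) KOm by blast
  have ycl: "\<And>n. y n \<in> closure Om" using yw(1) KOm closure_subset by blast
  have ray: "\<And>s. 0 \<le> s \<Longrightarrow> y0 + s *\<^sub>R d0 \<in> closure Om \<and> y0 - s *\<^sub>R d0 \<in> closure Om"
  proof -
    fix s :: real assume s: "0 \<le> s"
    have ev: "eventually (\<lambda>n. s \<le> real (r n) + 1) sequentially"
    proof -
      obtain N :: nat where "s \<le> real N" using real_arch_simple by blast
      have "\<forall>n\<ge>N. s \<le> real (r n) + 1"
      proof (intro allI impI)
        fix n assume "N \<le> n"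
        then have "N \<le> r n" using seq_suble[OF R(1), of n] by linarith
        then have "real N \<le> real (r n)" by simp
        then show "s \<le> real (r n) + 1" using \<open>s \<le> real N\<close> by linarith
      qed
      then show ?thesis unfolding eventually_sequentially by blast
    qed
    have le1: "\<And>n. s \<le> real n + 1 \<Longrightarrow> s / norm (w n) \<le> 1 \<and> 0 \<le> s / norm (w n)"
    proof -
      fix n assume sn: "s \<le> real n + 1"
      have "s \<le> norm (w n)" using sn yw(4)[of n] by linarith
      then show "s / norm (w n) \<le> 1 \<and> 0 \<le> s / norm (w n)" using wpos[of n] s by (simp add: divide_le_eq_1_pos)
    qed
    have p1: "\<And>n. s \<le> real n + 1 \<Longrightarrow> y n + s *\<^sub>R d n \<in> closure Om"
    proof -
      fix n assume "s \<le> real n + 1"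
      then have "y n + (s / norm (w n)) *\<^sub>R ((y n + w n) - y n) \<in> closure Om"
        using seg_cl[OF ycl yw(2)] le1 by blast
      then show "y n + s *\<^sub>R d n \<in> closure Om" by (simp add: d_def)
    qed
    have p2: "\<And>n. s \<le> real n + 1 \<Longrightarrow> y n - s *\<^sub>R d n \<in> closure Om"
    proof -
      fix n assume "s \<le> real n + 1"
      then have "y n + (s / norm (w n)) *\<^sub>R ((y n - w n) - y n) \<in> closure Om"
        using seg_cl[OF ycl yw(3)] le1 by blast
      then show "y n - s *\<^sub>R d n \<in> closure Om" by (simp add: d_def)
    qed
    have "(\<lambda>n. y (r n) + s *\<^sub>R d (r n)) \<longlonglongrightarrow> y0 + s *\<^sub>R d0"
      by (intro tendsto_intros R(4,5))
    moreover have "eventually (\<lambda>n. y (r n) + s *\<^sub>R d (r n) \<in> closure Om) sequentially"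
      using ev by eventually_elim (rule p1)
    ultimately have A: "y0 + s *\<^sub>R d0 \<in> closure Om" by (rule lim_cl)
    have "(\<lambda>n. y (r n) - s *\<^sub>R d (r n)) \<longlonglongrightarrow> y0 - s *\<^sub>R d0"
      by (intro tendsto_intros R(4,5))
    moreover have "eventually (\<lambda>n. y (r n) - s *\<^sub>R d (r n) \<in> closure Om) sequentially"
      using ev by eventually_elim (rule p2)
    ultimately have B: "y0 - s *\<^sub>R d0 \<in> closure Om" by (rule lim_cl)
    show "y0 + s *\<^sub>R d0 \<in> closure Om \<and> y0 - s *\<^sub>R d0 \<in> closure Om" using A B by simp
  qed
  have "d0 \<in> AC" using L_rec[OF y0] ray by blast
  moreover have "- d0 \<in> AC" using L_rec[OF y0, of "- d0"] ray by simp
  ultimately have "d0 = 0" by (rule AC_pointed)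
  then show False using R(3) by simp
qed

end

context qh begin

definition ex :: "'a \<Rightarrow> 'a \<Rightarrow> real" where
  "ex z w = Sup {t. 0 \<le> t \<and> z + t *\<^sub>R w \<in> Om}"

lemma ex_main:
  assumes z: "z \<in> Om" and w: "w \<notin> AC"
  shows "0 < ex z w \<and> (\<forall>t. 0 \<le> t \<longrightarrow> (z + t *\<^sub>R w \<in> Om \<longleftrightarrow> t < ex z w)) \<and> z + ex z w *\<^sub>R w \<in> closure Om"
proof -
  define S where "S = {t. 0 \<le> t \<and> z + t *\<^sub>R w \<in> Om}"
  have exS: "ex z w = Sup S" by (simp add: ex_def S_def)
  obtain T where T: "0 \<le> T" "z + T *\<^sub>R w \<notin> closure Om"
    using L_rec[OF z, of w] w by blast
  have down: "\<And>t t'. t \<in> S \<Longrightarrow> 0 \<le> t' \<Longrightarrow> t' \<le> t \<Longrightarrow> t' \<in> S"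
  proof -
    fix t t' assume t: "t \<in> S" and t': "0 \<le> t'" "t' \<le> t"
    show "t' \<in> S"
    proof (cases "t = 0")
      case True then show ?thesis using t t' by (simp add: S_def)
    next
      case False
      then have tp: "t > 0" using t by (simp add: S_def)
      have "z + (t' / t) *\<^sub>R ((z + t *\<^sub>R w) - z) \<in> Om"
        using seg_Om2[OF z, of "z + t *\<^sub>R w" "t' / t"] t t' tp by (simp add: S_def divide_le_eq_1_pos)
      then show ?thesis using t' tp by (simp add: S_def)
    qed
  qed
  have ltT: "\<And>t. t \<in> S \<Longrightarrow> t < T"
  proof (rule ccontr)
    fix t assume t: "t \<in> S" and "\<not> t < T"
    then have "T \<in> S" using down[OF t T(1)] by simp
    then show False using T(2) closure_subset by (auto simp: S_def)
  qed
  have bdd: "bdd_above S" using ltT by (meson bdd_above.I less_imp_le)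
  have ne: "0 \<in> S" using z by (simp add: S_def)
  have opnS: "\<And>t. t \<in> S \<Longrightarrow> \<exists>t'\<in>S. t < t'"
  proof -
    fix t assume t: "t \<in> S"
    then have zt: "z + t *\<^sub>R w \<in> Om" "0 \<le> t" by (auto simp: S_def)
    obtain e where e: "e > 0" "ball (z + t *\<^sub>R w) e \<subseteq> Om" using opn zt open_contains_ball by blast
    define h where "h = e / (norm w + 1)"
    have np: "norm w + 1 > 0" by (simp add: add_nonneg_pos)
    have h: "h > 0" using e np by (simp add: h_def)
    have "norm (h *\<^sub>R w) < e"
    proof -
      have "norm (h *\<^sub>R w) = h * norm w" using h by simp
      also have "\<dots> < h * (norm w + 1)" using h by simp
      also have "\<dots> = e" using np by (simp add: h_def)
      finally show ?thesis .
    qed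
    then have "z + (t + h) *\<^sub>R w \<in> ball (z + t *\<^sub>R w) e"
      by (simp add: dist_norm scaleR_add_left)
    then have "t + h \<in> S" using e zt h by (auto simp: S_def)
    then show "\<exists>t'\<in>S. t < t'" using h by force
  qed
  have iff: "\<And>t. 0 \<le> t \<Longrightarrow> (t \<in> S \<longleftrightarrow> t < Sup S)"
  proof
    fix t assume "0 \<le> t" "t \<in> S"
    then obtain t' where "t' \<in> S" "t < t'" using opnS by blast
    then show "t < Sup S" using cSup_upper[OF _ bdd] by (meson less_le_trans)
  next
    fix t assume t: "0 \<le> t" "t < Sup S"
    then obtain t' where "t' \<in> S" "t < t'" using less_cSup_iff[of S t] ne bdd by blast
    then show "t \<in> S" using down t by (meson less_imp_le)
  qed
  have pos: "0 < Sup S" using iff[of 0] ne by simp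
  have cl: "z + Sup S *\<^sub>R w \<in> closure Om" unfolding closure_approachable
  proof (intro allI impI)
    fix e :: real assume e: "e > 0"
    have np: "norm w + 1 > 0" by (simp add: add_nonneg_pos)
    define t where "t = max 0 (Sup S - e / (norm w + 1))"
    have t0: "0 \<le> t" by (simp add: t_def)
    have tlt: "t < Sup S" using pos e np by (simp add: t_def)
    then have "t \<in> S" using iff t0 by blast
    then have zt: "z + t *\<^sub>R w \<in> Om" by (simp add: S_def)
    have d1: "Sup S - t \<le> e / (norm w + 1)" "0 \<le> Sup S - t" using tlt by (auto simp: t_def)
    have "dist (z + t *\<^sub>R w) (z + Sup S *\<^sub>R w) = (Sup S - t) * norm w"
    proof -
      have "dist (z + t *\<^sub>R w) (z + Sup S *\<^sub>R w) = norm ((t - Sup S) *\<^sub>R w)"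
        by (simp add: dist_norm scaleR_diff_left)
      also have "\<dots> = (Sup S - t) * norm w" using d1(2) by simp
      finally show ?thesis .
    qed
    also have "\<dots> \<le> (e / (norm w + 1)) * norm w" using d1 by (intro mult_right_mono) auto
    also have "\<dots> < e"
    proof -
      have "(e / (norm w + 1)) * norm w = e * (norm w / (norm w + 1))" by simp
      also have "norm w / (norm w + 1) < 1" using np by (subst divide_less_eq_1_pos) auto
      then have "e * (norm w / (norm w + 1)) < e * 1" using e by (intro mult_strict_left_mono) auto
      finally show ?thesis by simp
    qed
    finally show "\<exists>y\<in>Om. dist y (z + Sup S *\<^sub>R w) < e" using zt by blast
  qed
  show ?thesis using pos iff cl unfolding exS by (auto simp: S_def)
qed

lemma ex_pos: "z \<in> Om \<Longrightarrow> w \<notin> AC \<Longrightarrow> 0 < ex z w"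
  using ex_main by blast
lemma ex_iff: "z \<in> Om \<Longrightarrow> w \<notin> AC \<Longrightarrow> 0 \<le> t \<Longrightarrow> (z + t *\<^sub>R w \<in> Om \<longleftrightarrow> t < ex z w)"
  using ex_main by blast
lemma ex_cl: "z \<in> Om \<Longrightarrow> w \<notin> AC \<Longrightarrow> z + ex z w *\<^sub>R w \<in> closure Om"
  using ex_main by blast
lemma ex_out: "z \<in> Om \<Longrightarrow> w \<notin> AC \<Longrightarrow> z + ex z w *\<^sub>R w \<notin> Om"
  using ex_iff[of z w "ex z w"] ex_pos[of z w] by simp

lemma not_univ: "Om \<noteq> UNIV"
proof
  assume U: "Om = UNIV"
  obtain v :: 'a where v: "v \<noteq> 0" using nonzero_Basis SOME_Basis by blast
  obtain t where "0 + t *\<^sub>R v \<notin> Om" using noline[OF v] by blast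
  then show False using U by simp
qed

lemma unbounded: "\<not> bounded Om"
proof
  assume bdd: "bounded Om"
  obtain p where p: "p \<in> frontier Om" using frontier_not_empty[OF nonempty not_univ] by blast
  have pcl: "p \<in> closure Om" and pn: "p \<notin> Om" using p int_Om by (auto simp: frontier_def)
  obtain B where B: "\<And>z. z \<in> Om \<Longrightarrow> norm z \<le> B" using bdd unfolding bounded_iff by blast
  obtain dl where dl: "dl > 0" "\<And>y w. y \<in> K \<Longrightarrow> y + w \<notin> Om \<Longrightarrow> dl \<le> norm w" using delta by blast
  obtain x0 where x0: "x0 \<in> Om" using nonempty by blast
  obtain n :: nat where n: "2 * B / dl < real n" using reals_Archimedean2 by blast
  define k where "k = real n + 1"
  have k: "k \<ge> 1" by (simp add: k_def)
  define x where "x = p + (1 / k) *\<^sub>R (x0 - p)"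
  have x: "x \<in> Om" unfolding x_def using shrink[OF x0 pcl, of "1/k"] k by simp
  obtain y Li where y: "y \<in> K" and Li: "linear Li" and m1: "\<forall>w. x + w \<in> Om \<longleftrightarrow> y + Li w \<in> Om"
    using pull[OF x] by blast
  define w1 where "w1 = - ((1 / k) *\<^sub>R (x0 - p))"
  have "x + w1 = p" by (simp add: x_def w1_def)
  then have "y + Li w1 \<notin> Om" using m1 pn by metis
  then have d1: "dl \<le> norm (Li w1)" using dl(2)[OF y] by blast
  have "x + (- (k - 1)) *\<^sub>R w1 = x0"
  proof -
    have "(- (k - 1)) *\<^sub>R w1 = ((k - 1) * (1 / k)) *\<^sub>R (x0 - p)"
      unfolding w1_def by (simp only: scaleR_minus_right scaleR_minus_left minus_minus scaleR_scaleR mult_minus_left)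
    also have "(k - 1) * (1 / k) = (k - 1) / k" by simp
    also have "(k - 1) / k = 1 - 1 / k" using k by (simp add: field_simps)
    finally show ?thesis by (simp add: x_def algebra_simps)
  qed
  then have "y + Li ((- (k - 1)) *\<^sub>R w1) \<in> Om" using m1 x0 by metis
  then have yin: "y + (- (k - 1)) *\<^sub>R Li w1 \<in> Om" using linear_scale[OF Li] by simp
  have "norm ((- (k - 1)) *\<^sub>R Li w1) \<le> norm (y + (- (k - 1)) *\<^sub>R Li w1) + norm y"
    by (metis add_diff_cancel_left' norm_triangle_ineq4)
  also have "\<dots> \<le> 2 * B" using B[OF yin] B[of y] y KOm by force
  finally have "(k - 1) * norm (Li w1) \<le> 2 * B" using k by simp
  moreover have "(k - 1) * dl \<le> (k - 1) * norm (Li w1)" using d1 k by (intro mult_left_mono) auto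
  ultimately have "real n * dl \<le> 2 * B" by (simp add: k_def)
  moreover have "2 * B < real n * dl" using n dl(1) by (simp add: divide_less_eq)
  ultimately show False by simp
qed

lemma AC_nonzero: "\<exists>d\<in>AC. d \<noteq> 0"
proof -
  obtain x0 where x0: "x0 \<in> Om" using nonempty by blast
  have "\<forall>n::nat. \<exists>z\<in>Om. real n + 1 < norm (z - x0)"
  proof
    fix n :: nat
    have "\<not> (\<forall>z\<in>Om. norm z \<le> real n + 1 + norm x0)" using unbounded unfolding bounded_iff by blast
    then obtain z where z: "z \<in> Om" "real n + 1 + norm x0 < norm z" by (auto simp: not_le)
    have "norm z \<le> norm (z - x0) + norm x0" by (metis diff_add_cancel norm_triangle_ineq)
    then show "\<exists>z\<in>Om. real n + 1 < norm (z - x0)" using z by force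
  qed
  then obtain z where z: "\<And>n. z n \<in> Om" "\<And>n. real n + 1 < norm (z n - x0)" by metis
  have zpos: "\<And>n. norm (z n - x0) > 0"
  proof -
    fix n have "real n + 1 > 0" by simp
    then show "norm (z n - x0) > 0" using z(2)[of n] by linarith
  qed
  define d where "d n = (1 / norm (z n - x0)) *\<^sub>R (z n - x0)" for n
  have dS: "\<And>n. d n \<in> sphere 0 1" using zpos by (simp add: d_def)
  obtain d0 r where R: "d0 \<in> sphere 0 1" "strict_mono r" "(\<lambda>n. d (r n)) \<longlonglongrightarrow> d0"
    using extract1[OF compact_sphere[of 0 1], of d] dS by auto
  have ray: "\<And>s. 0 \<le> s \<Longrightarrow> x0 + s *\<^sub>R d0 \<in> closure Om"
  proof -
    fix s :: real assume s: "0 \<le> s"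
    obtain N :: nat where N: "s \<le> real N" using real_arch_simple by blast
    have ev: "eventually (\<lambda>n. x0 + s *\<^sub>R d (r n) \<in> closure Om) sequentially"
      unfolding eventually_sequentially
    proof (intro exI allI impI)
      fix n assume "N \<le> n"
      then have "N \<le> r n" using seq_suble[OF R(2), of n] by linarith
      then have "s \<le> norm (z (r n) - x0)" using N z(2)[of "r n"] by (smt (verit) of_nat_le_iff)
      then have th: "s / norm (z (r n) - x0) \<le> 1" "0 \<le> s / norm (z (r n) - x0)"
        using zpos[of "r n"] s by (auto simp: divide_le_eq_1_pos)
      have "x0 + (s / norm (z (r n) - x0)) *\<^sub>R (z (r n) - x0) \<in> Om"
        using seg_Om2[OF x0 z(1) th(2) th(1)] .
      then show "x0 + s *\<^sub>R d (r n) \<in> closure Om" using closure_subset by (force simp: d_def)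
    qed
    show "x0 + s *\<^sub>R d0 \<in> closure Om"
      by (rule lim_cl[OF _ ev]) (intro tendsto_intros R(3))
  qed
  have "d0 \<in> AC" using L_rec[OF x0 ray] .
  moreover have "d0 \<noteq> 0" using R(1) by auto
  ultimately show ?thesis by blast
qed

end

context qh begin

lemma far_out:
  assumes x0: "x0 \<in> Om" and w: "w \<notin> AC"
  shows "\<exists>T\<ge>0. \<forall>t\<ge>T. x0 + t *\<^sub>R w \<notin> Om"
proof -
  obtain T where T: "0 \<le> T" "x0 + T *\<^sub>R w \<notin> closure Om"
    using L_rec[OF x0, of w] w by blast
  have "\<forall>t\<ge>T. x0 + t *\<^sub>R w \<notin> Om"
  proof (intro allI impI)
    fix t assume t: "T \<le> t"
    show "x0 + t *\<^sub>R w \<notin> Om"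
    proof
      assume xt: "x0 + t *\<^sub>R w \<in> Om"
      have "T \<noteq> 0"
      proof
        assume "T = 0"
        then have "x0 + T *\<^sub>R w = x0" by simp
        then have "x0 \<notin> closure Om" using T(2) by metis
        then show False using x0 closure_subset by blast
      qed
      then have tp: "t > 0" using t T by simp
      have "x0 + (T / t) *\<^sub>R ((x0 + t *\<^sub>R w) - x0) \<in> Om"
        using seg_Om2[OF x0 xt, of "T / t"] T t tp by (simp add: divide_le_eq_1_pos)
      then have "x0 + T *\<^sub>R w \<in> Om" using tp by simp
      then show False using T(2) closure_subset by blast
    qed
  qed
  then show ?thesis using T(1) by (intro exI[where x=T]) simp
qed

lemma lim_AC:
  assumes "\<And>n. inverse (real (Suc n)) *\<^sub>R a + b \<in> AC"
  shows "b \<in> AC"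
proof -
  have lim: "(\<lambda>n. inverse (real (Suc n)) *\<^sub>R a + b) \<longlonglongrightarrow> 0 *\<^sub>R a + b"
    by (intro tendsto_intros LIMSEQ_inverse_real_of_nat)
  have "0 *\<^sub>R a + b \<in> AC" by (rule lim_in[OF AC_closed lim]) (intro always_eventually allI assms)
  then show ?thesis by simp
qed

lemma fwd_main:
  assumes u: "u \<in> AC" "u \<noteq> 0" and v: "v \<in> AC" "v \<noteq> 0"
    and H2: "\<And>e. e > 0 \<Longrightarrow> v - e *\<^sub>R u \<notin> AC"
    and H3: "c > 0" "u - c *\<^sub>R v \<notin> AC"
  shows "\<exists>a b. a \<noteq> b \<and> closed_segment a b \<subseteq> frontier Om"
proof -
  obtain x0 where x0: "x0 \<in> Om" using nonempty by blast
  obtain dl where dl: "dl > 0" "\<And>y w. y \<in> K \<Longrightarrow> y + w \<notin> Om \<Longrightarrow> dl \<le> norm w" using delta by blast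
  obtain M where M: "M > 0" "\<And>y w. y \<in> K \<Longrightarrow> y + w \<in> closure Om \<Longrightarrow> y - w \<in> closure Om \<Longrightarrow> norm w \<le> M"
    using noline_bound by blast
  have mu: "- u \<notin> AC" using AC_pointed u by blast
  have mv: "- v \<notin> AC" using AC_pointed v by blast
  define x where "x n = x0 + real n *\<^sub>R (u + v)" for n
  have x0v: "\<And>s. 0 \<le> s \<Longrightarrow> x0 + s *\<^sub>R v \<in> Om" using AC_D[OF v(1) x0] .
  have x0u: "\<And>s. 0 \<le> s \<Longrightarrow> x0 + s *\<^sub>R u \<in> Om" using AC_D[OF u(1) x0] .
  have xin: "\<And>n. x n \<in> Om" unfolding x_def using AC_D[OF AC_add[OF u(1) v(1)] x0] by simp
  define al where "al n = ex (x n) (- u)" for n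
  define be where "be n = ex (x n) (- v)" for n
  have alpos: "\<And>n. al n > 0" unfolding al_def using ex_pos[OF xin mu] .
  have bepos: "\<And>n. be n > 0" unfolding be_def using ex_pos[OF xin mv] .
  have alge: "\<And>n. real n \<le> al n"
  proof (rule ccontr)
    fix n assume "\<not> real n \<le> al n"
    then have lt: "al n < real n" by simp
    have "x n + al n *\<^sub>R (- u) = (x0 + real n *\<^sub>R v) + (real n - al n) *\<^sub>R u"
      by (simp add: x_def algebra_simps)
    moreover have "(x0 + real n *\<^sub>R v) + (real n - al n) *\<^sub>R u \<in> Om"
      using AC_D[OF u(1) x0v] lt by simp
    moreover have "x n + al n *\<^sub>R (- u) \<notin> Om" unfolding al_def using ex_out[OF xin mu] .
    ultimately show False by simp
  qed
  have bege: "\<And>n. real n \<le> be n"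
  proof (rule ccontr)
    fix n assume "\<not> real n \<le> be n"
    then have lt: "be n < real n" by simp
    have "x n + be n *\<^sub>R (- v) = (x0 + real n *\<^sub>R u) + (real n - be n) *\<^sub>R v"
      by (simp add: x_def algebra_simps)
    moreover have "(x0 + real n *\<^sub>R u) + (real n - be n) *\<^sub>R v \<in> Om"
      using AC_D[OF v(1) x0u] lt by simp
    moreover have "x n + be n *\<^sub>R (- v) \<notin> Om" unfolding be_def using ex_out[OF xin mv] .
    ultimately show False by simp
  qed
  have alle: "\<And>e. e > 0 \<Longrightarrow> \<exists>N. \<forall>n\<ge>N. al n \<le> (1 + e) * real n"
  proof -
    fix e :: real assume e: "e > 0"
    obtain T where T: "T \<ge> 0" "\<And>t. t \<ge> T \<Longrightarrow> x0 + t *\<^sub>R (v - e *\<^sub>R u) \<notin> Om"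
      using far_out[OF x0 H2[OF e]] by blast
    obtain N :: nat where N: "T \<le> real N" using real_arch_simple by blast
    have "\<forall>n\<ge>N. al n \<le> (1 + e) * real n"
    proof (intro allI impI)
      fix n assume n: "N \<le> n"
      then have "real N \<le> real n" by simp
      then have "T \<le> real n" using N by linarith
      then have out: "x0 + real n *\<^sub>R (v - e *\<^sub>R u) \<notin> Om" using T(2) by blast
      have "x n + ((1 + e) * real n) *\<^sub>R (- u) = x0 + real n *\<^sub>R (v - e *\<^sub>R u)"
        by (simp add: x_def algebra_simps)
      then have "x n + ((1 + e) * real n) *\<^sub>R (- u) \<notin> Om" using out by simp
      then show "al n \<le> (1 + e) * real n"
        using ex_iff[OF xin mu, of "(1 + e) * real n" n] e unfolding al_def by (simp add: not_less)
    qed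
    then show "\<exists>N. \<forall>n\<ge>N. al n \<le> (1 + e) * real n" by blast
  qed
  define B where "B = 1 + c"
  have B: "B > 1" using H3(1) by (simp add: B_def)
  obtain N2 :: nat where N2: "\<And>n. n \<ge> N2 \<Longrightarrow> be n \<le> B * real n"
  proof -
    obtain T where T: "T \<ge> 0" "\<And>t. t \<ge> T \<Longrightarrow> x0 + t *\<^sub>R (u - c *\<^sub>R v) \<notin> Om"
      using far_out[OF x0 H3(2)] by blast
    obtain N :: nat where N: "T \<le> real N" using real_arch_simple by blast
    have "\<forall>n\<ge>N. be n \<le> B * real n"
    proof (intro allI impI)
      fix n assume n: "N \<le> n"
      then have "real N \<le> real n" by simp
      then have "T \<le> real n" using N by linarith
      then have out: "x0 + real n *\<^sub>R (u - c *\<^sub>R v) \<notin> Om" using T(2) by blast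
      have "x n + (B * real n) *\<^sub>R (- v) = x0 + real n *\<^sub>R (u - c *\<^sub>R v)"
        by (simp add: x_def B_def algebra_simps)
      then have "x n + (B * real n) *\<^sub>R (- v) \<notin> Om" using out by simp
      then show "be n \<le> B * real n"
        using ex_iff[OF xin mv, of "B * real n" n] B unfolding be_def by (simp add: not_less)
    qed
    then show ?thesis using that by blast
  qed
  define r0 where "r0 = 1 / (2 * B)"
  have r0: "r0 > 0" "r0 < 1" "r0 * B = 1/2" using B by (auto simp: r0_def)
  define z where "z n r = x n + (r * be n) *\<^sub>R (- v)" for n r
  have zin: "\<And>n r. 0 \<le> r \<Longrightarrow> r \<le> r0 \<Longrightarrow> z n r \<in> Om"
  proof -
    fix n r assume r: "0 \<le> r" "r \<le> r0"
    have "r * be n < be n" using bepos[of n] r r0 by (simp add: mult_less_cancel_right2 less_le_trans)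
    then show "z n r \<in> Om" unfolding z_def be_def
      using ex_iff[OF xin mv, of "r * ex (x n) (- v)" n] r bepos[of n] by (simp add: be_def)
  qed
  define sg where "sg n r = ex (z n r) (- u)" for n r
  have sgge: "\<And>n r. n \<ge> N2 \<Longrightarrow> 0 \<le> r \<Longrightarrow> r \<le> r0 \<Longrightarrow> real n \<le> sg n r"
  proof (rule ccontr)
    fix n r assume n: "n \<ge> N2" and r: "0 \<le> r" "r \<le> r0" and "\<not> real n \<le> sg n r"
    then have lt: "sg n r < real n" by simp
    have sp: "0 < sg n r" unfolding sg_def using ex_pos[OF zin[OF r] mu] .
    have "r * be n \<le> r0 * (B * real n)" using N2[OF n] r bepos[of n]
      by (meson mult_mono' less_imp_le)
    also have "\<dots> = real n / 2" using r0(3) by (simp add: mult.assoc[symmetric])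
    finally have rb: "r * be n \<le> real n / 2" .
    have "z n r + sg n r *\<^sub>R (- u) = (x0 + (real n - r * be n) *\<^sub>R v) + (real n - sg n r) *\<^sub>R u"
      by (simp add: z_def x_def algebra_simps)
    moreover have "(x0 + (real n - r * be n) *\<^sub>R v) + (real n - sg n r) *\<^sub>R u \<in> Om"
      using AC_D[OF u(1) x0v[of "real n - r * be n"]] rb lt by simp
    moreover have "z n r + sg n r *\<^sub>R (- u) \<notin> Om" unfolding sg_def using ex_out[OF zin[OF r] mu] .
    ultimately show False by simp
  qed
  have sgle: "\<And>n r. 0 \<le> r \<Longrightarrow> r \<le> r0 \<Longrightarrow> sg n r \<le> al n"
  proof (rule ccontr)
    fix n r assume r: "0 \<le> r" "r \<le> r0" and "\<not> sg n r \<le> al n"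
    then have lt: "al n < sg n r" by simp
    have "z n r + al n *\<^sub>R (- u) \<in> Om"
      using ex_iff[OF zin[OF r] mu, of "al n"] lt alpos[of n] unfolding sg_def by simp
    then have "(z n r + al n *\<^sub>R (- u)) + (r * be n) *\<^sub>R v \<in> Om"
      using AC_D[OF v(1)] r bepos[of n] by simp
    moreover have "(z n r + al n *\<^sub>R (- u)) + (r * be n) *\<^sub>R v = x n + al n *\<^sub>R (- u)"
      by (simp add: z_def algebra_simps)
    moreover have "x n + al n *\<^sub>R (- u) \<notin> Om" unfolding al_def using ex_out[OF xin mu] .
    ultimately show False by metis
  qed
  have "\<forall>n. \<exists>p. fst p \<in> K \<and> (linear (snd p) \<and> (\<forall>w. x n + w \<in> Om \<longleftrightarrow> fst p + snd p w \<in> Om) \<and>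
    (\<forall>w. x n + w \<in> closure Om \<longleftrightarrow> fst p + snd p w \<in> closure Om) \<and> (\<forall>w\<in>AC. snd p w \<in> AC))"
  proof
    fix n
    obtain yy LL where yy: "yy \<in> K" and LL: "linear LL \<and> (\<forall>w. x n + w \<in> Om \<longleftrightarrow> yy + LL w \<in> Om) \<and>
      (\<forall>w. x n + w \<in> closure Om \<longleftrightarrow> yy + LL w \<in> closure Om) \<and> (\<forall>w\<in>AC. LL w \<in> AC)"
      using pull[OF xin[of n]] by (elim bexE exE)
    show "\<exists>p. fst p \<in> K \<and> (linear (snd p) \<and> (\<forall>w. x n + w \<in> Om \<longleftrightarrow> fst p + snd p w \<in> Om) \<and>
      (\<forall>w. x n + w \<in> closure Om \<longleftrightarrow> fst p + snd p w \<in> closure Om) \<and> (\<forall>w\<in>AC. snd p w \<in> AC))"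
      apply (rule exI[where x="(yy, LL)"])
      apply (simp only: fst_conv snd_conv)
      using yy LL by (rule conjI)
  qed
  note ex_p = this
  obtain f where f: "\<forall>n. fst (f n) \<in> K \<and> (linear (snd (f n)) \<and> (\<forall>w. x n + w \<in> Om \<longleftrightarrow> fst (f n) + snd (f n) w \<in> Om) \<and>
    (\<forall>w. x n + w \<in> closure Om \<longleftrightarrow> fst (f n) + snd (f n) w \<in> closure Om) \<and> (\<forall>w\<in>AC. snd (f n) w \<in> AC))"
    using choice[OF ex_p] by (rule exE)
  define y where "y n = fst (f n)" for n
  define Li where "Li n = snd (f n)" for n
  have fn: "\<And>n. fst (f n) \<in> K \<and> (linear (snd (f n)) \<and> (\<forall>w. x n + w \<in> Om \<longleftrightarrow> fst (f n) + snd (f n) w \<in> Om) \<and>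
    (\<forall>w. x n + w \<in> closure Om \<longleftrightarrow> fst (f n) + snd (f n) w \<in> closure Om) \<and> (\<forall>w\<in>AC. snd (f n) w \<in> AC))"
    using f by (rule spec)
  have y: "\<And>n. y n \<in> K" unfolding y_def using fn by (rule conjunct1)
  have Li: "\<And>n. linear (Li n)" unfolding Li_def using fn by (rule conjunct1[OF conjunct2])
  have m1: "\<And>n w. x n + w \<in> Om \<longleftrightarrow> y n + Li n w \<in> Om"
    unfolding y_def Li_def using fn by (rule spec[OF conjunct1[OF conjunct2[OF conjunct2]]])
  have m2: "\<And>n w. x n + w \<in> closure Om \<longleftrightarrow> y n + Li n w \<in> closure Om"
    unfolding y_def Li_def using fn by (rule spec[OF conjunct1[OF conjunct2[OF conjunct2[OF conjunct2]]]])
  have m3: "\<And>n w. w \<in> AC \<Longrightarrow> Li n w \<in> AC"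
    unfolding Li_def using fn by (rule bspec[OF conjunct2[OF conjunct2[OF conjunct2[OF conjunct2]]]])
  have yOm: "\<And>n. y n \<in> Om" using y KOm by blast
  define U where "U n = al n *\<^sub>R Li n u" for n
  define V where "V n = be n *\<^sub>R Li n v" for n
  have Lis: "\<And>n a w. Li n (a *\<^sub>R w) = a *\<^sub>R Li n w" using Li linear_scale by blast
  have Lia: "\<And>n w1 w2. Li n (w1 + w2) = Li n w1 + Li n w2" using Li linear_add by blast
  have LiN: "\<And>n w. Li n (- w) = - Li n w" using Li linear_neg by blast
  have Ueq: "\<And>n. y n + Li n (al n *\<^sub>R (- u)) = y n - U n" by (simp add: Lis LiN U_def)
  have Veq: "\<And>n. y n + Li n (be n *\<^sub>R (- v)) = y n - V n" by (simp add: Lis LiN V_def)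
  have Ua: "\<And>n. y n - U n \<notin> Om"
  proof -
    fix n have "x n + al n *\<^sub>R (- u) \<notin> Om" unfolding al_def using ex_out[OF xin mu] .
    then have "y n + Li n (al n *\<^sub>R (- u)) \<notin> Om" by (simp only: m1[symmetric] not_False_eq_True)
    then show "y n - U n \<notin> Om" by (simp only: Ueq simp_thms)
  qed
  have Ub: "\<And>n. y n - U n \<in> closure Om"
  proof -
    fix n have "x n + al n *\<^sub>R (- u) \<in> closure Om" unfolding al_def using ex_cl[OF xin mu] .
    then have "y n + Li n (al n *\<^sub>R (- u)) \<in> closure Om" by (simp only: m2[symmetric] simp_thms)
    then show "y n - U n \<in> closure Om" by (simp only: Ueq simp_thms)
  qed
  have Uc: "\<And>n. y n + U n \<in> closure Om"
  proof -
    fix n have "U n \<in> AC" unfolding U_def using AC_scale[OF m3[OF u(1)]] alpos[of n] by simp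
    then show "y n + U n \<in> closure Om" using AC_D1 yOm closure_subset by blast
  qed
  have UM: "\<And>n. norm (U n) \<le> M" using M(2)[OF y Uc Ub] .
  have Va: "\<And>n. y n - V n \<notin> Om"
  proof -
    fix n have "x n + be n *\<^sub>R (- v) \<notin> Om" unfolding be_def using ex_out[OF xin mv] .
    then have "y n + Li n (be n *\<^sub>R (- v)) \<notin> Om" by (simp only: m1[symmetric] not_False_eq_True)
    then show "y n - V n \<notin> Om" by (simp only: Veq simp_thms)
  qed
  have Vb: "\<And>n. y n - V n \<in> closure Om"
  proof -
    fix n have "x n + be n *\<^sub>R (- v) \<in> closure Om" unfolding be_def using ex_cl[OF xin mv] .
    then have "y n + Li n (be n *\<^sub>R (- v)) \<in> closure Om" by (simp only: m2[symmetric] simp_thms)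
    then show "y n - V n \<in> closure Om" by (simp only: Veq simp_thms)
  qed
  have Vc: "\<And>n. y n + V n \<in> closure Om"
  proof -
    fix n have "V n \<in> AC" unfolding V_def using AC_scale[OF m3[OF v(1)]] bepos[of n] by simp
    then show "y n + V n \<in> closure Om" using AC_D1 yOm closure_subset by blast
  qed
  have VM: "\<And>n. norm (V n) \<le> M" using M(2)[OF y Vc Vb] .
  have Vd: "\<And>n. dl \<le> norm (V n)" using dl(2)[OF y Va[unfolded diff_conv_add_uminus]] by simp
  define P where "P n r = y n - r *\<^sub>R V n - (sg n r / al n) *\<^sub>R U n" for n r
  have Peq: "\<And>n r. P n r = y n + Li n ((r * be n) *\<^sub>R (- v) + sg n r *\<^sub>R (- u))"
  proof -
    fix n r
    have e1: "(sg n r / al n) *\<^sub>R U n = sg n r *\<^sub>R Li n u" using alpos[of n] by (simp add: U_def)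
    have e2: "r *\<^sub>R V n = (r * be n) *\<^sub>R Li n v" by (simp add: V_def)
    have "Li n ((r * be n) *\<^sub>R (- v) + sg n r *\<^sub>R (- u)) = (r * be n) *\<^sub>R Li n (- v) + sg n r *\<^sub>R Li n (- u)"
      by (simp only: Lia Lis)
    also have "\<dots> = - ((r * be n) *\<^sub>R Li n v) - sg n r *\<^sub>R Li n u"
      by (simp only: LiN scaleR_minus_right) simp
    finally have e3: "Li n ((r * be n) *\<^sub>R (- v) + sg n r *\<^sub>R (- u)) = - ((r * be n) *\<^sub>R Li n v) - sg n r *\<^sub>R Li n u" .
    show "P n r = y n + Li n ((r * be n) *\<^sub>R (- v) + sg n r *\<^sub>R (- u))"
      unfolding P_def e1 e2 e3 by simp
  qed
  have zeq: "\<And>n r. z n r + sg n r *\<^sub>R (- u) = x n + ((r * be n) *\<^sub>R (- v) + sg n r *\<^sub>R (- u))"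
    unfolding z_def by (rule add.assoc)
  have Pout: "\<And>n r. 0 \<le> r \<Longrightarrow> r \<le> r0 \<Longrightarrow> P n r \<notin> Om"
  proof -
    fix n r assume r: "0 \<le> r" "r \<le> r0"
    have "z n r + sg n r *\<^sub>R (- u) \<notin> Om" unfolding sg_def using ex_out[OF zin[OF r] mu] .
    then have "x n + ((r * be n) *\<^sub>R (- v) + sg n r *\<^sub>R (- u)) \<notin> Om" unfolding zeq .
    then have "y n + Li n ((r * be n) *\<^sub>R (- v) + sg n r *\<^sub>R (- u)) \<notin> Om" by (simp only: m1[symmetric] simp_thms)
    then show "P n r \<notin> Om" unfolding Peq .
  qed
  have Pcl: "\<And>n r. 0 \<le> r \<Longrightarrow> r \<le> r0 \<Longrightarrow> P n r \<in> closure Om"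
  proof -
    fix n r assume r: "0 \<le> r" "r \<le> r0"
    have "z n r + sg n r *\<^sub>R (- u) \<in> closure Om" unfolding sg_def using ex_cl[OF zin[OF r] mu] .
    then have "x n + ((r * be n) *\<^sub>R (- v) + sg n r *\<^sub>R (- u)) \<in> closure Om" unfolding zeq .
    then have "y n + Li n ((r * be n) *\<^sub>R (- v) + sg n r *\<^sub>R (- u)) \<in> closure Om" by (simp only: m2[symmetric] simp_thms)
    then show "P n r \<in> closure Om" unfolding Peq .
  qed
  have alr: "(\<lambda>n. al n / real n) \<longlonglongrightarrow> 1"
  proof (rule LIMSEQ_I)
    fix e :: real assume e: "e > 0"
    obtain N where N: "\<And>n. n \<ge> N \<Longrightarrow> al n \<le> (1 + e / 2) * real n" using alle[of "e / 2"] e by auto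
    have "\<forall>n\<ge>max N 1. norm (al n / real n - 1) < e"
    proof (intro allI impI)
      fix n assume n: "max N 1 \<le> n"
      then have np: "real n > 0" by simp
      have "1 \<le> al n / real n" using alge[of n] np by simp
      moreover have "al n / real n \<le> 1 + e / 2" using N[of n] n np by (simp add: divide_le_eq)
      ultimately show "norm (al n / real n - 1) < e" using e by simp
    qed
    then show "\<exists>no. \<forall>n\<ge>no. norm (al n / real n - 1) < e" by blast
  qed
  have ratio: "\<And>r. 0 \<le> r \<Longrightarrow> r \<le> r0 \<Longrightarrow> (\<lambda>n. sg n r / al n) \<longlonglongrightarrow> 1"
  proof -
    fix r assume r: "0 \<le> r" "r \<le> r0"
    have ev: "eventually (\<lambda>n. 1 \<le> sg n r / real n \<and> sg n r / real n \<le> al n / real n) sequentially"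
      unfolding eventually_sequentially
    proof (intro exI allI impI)
      fix n assume n: "max N2 1 \<le> n"
      then have np: "real n > 0" by simp
      have "1 \<le> sg n r / real n" using sgge[of n r] n r np by simp
      moreover have "sg n r / real n \<le> al n / real n" using sgle[OF r, of n] np by (simp add: divide_right_mono)
      ultimately show "1 \<le> sg n r / real n \<and> sg n r / real n \<le> al n / real n" by simp
    qed
    have sgr: "(\<lambda>n. sg n r / real n) \<longlonglongrightarrow> 1"
    proof (rule real_tendsto_sandwich[where f="\<lambda>n. 1" and h="\<lambda>n. al n / real n"])
      show "eventually (\<lambda>n. 1 \<le> sg n r / real n) sequentially" using ev by eventually_elim simp
      show "eventually (\<lambda>n. sg n r / real n \<le> al n / real n) sequentially" using ev by eventually_elim simp
    qed (auto intro: alr)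
    have q: "(\<lambda>n. (sg n r / real n) / (al n / real n)) \<longlonglongrightarrow> 1 / 1"
      by (rule tendsto_divide[OF sgr alr]) simp
    have ev2: "eventually (\<lambda>n. (sg n r / real n) / (al n / real n) = sg n r / al n) sequentially"
      unfolding eventually_sequentially
    proof (intro exI allI impI)
      fix n :: nat assume "1 \<le> n"
      then have "real n \<noteq> 0" by simp
      then show "(sg n r / real n) / (al n / real n) = sg n r / al n" by simp
    qed
    show "(\<lambda>n. sg n r / al n) \<longlonglongrightarrow> 1"
      using Lim_transform_eventually[OF q ev2] by simp
  qed
  have ev1: "eventually (\<lambda>n. y n \<in> K) sequentially" by (intro always_eventually allI y)
  have ev2: "eventually (\<lambda>n. U n \<in> cball 0 M) sequentially" by (intro always_eventually allI) (simp add: UM)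
  have ev3: "eventually (\<lambda>n. V n \<in> cball 0 M) sequentially" by (intro always_eventually allI) (simp add: VM)
  obtain ph y0 U0 V0 where R: "strict_mono ph" "y0 \<in> K" "U0 \<in> cball 0 M" "V0 \<in> cball 0 M"
    "(\<lambda>n. y (ph n)) \<longlonglongrightarrow> y0" "(\<lambda>n. U (ph n)) \<longlonglongrightarrow> U0" "(\<lambda>n. V (ph n)) \<longlonglongrightarrow> V0"
    using extract3[OF cK compact_cball[of 0 M] compact_cball[of 0 M] ev1 ev2 ev3] by blast
  have V0d: "dl \<le> norm V0"
    by (rule LIMSEQ_le_const[OF tendsto_norm[OF R(7)]]) (use Vd in blast)
  have front: "\<And>r. 0 \<le> r \<Longrightarrow> r \<le> r0 \<Longrightarrow> y0 - r *\<^sub>R V0 - U0 \<in> frontier Om"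
  proof -
    fix r assume r: "0 \<le> r" "r \<le> r0"
    have rt: "(\<lambda>n. sg (ph n) r / al (ph n)) \<longlonglongrightarrow> 1"
      using LIMSEQ_subseq_LIMSEQ[OF ratio[OF r] R(1)] by (simp add: o_def)
    have lim: "(\<lambda>n. P (ph n) r) \<longlonglongrightarrow> y0 - r *\<^sub>R V0 - 1 *\<^sub>R U0"
      unfolding P_def by (intro tendsto_intros R rt)
    have ev: "eventually (\<lambda>n. P (ph n) r \<notin> Om) sequentially" by (intro always_eventually allI Pout[OF r])
    have ev2: "eventually (\<lambda>n. P (ph n) r \<in> closure Om) sequentially" by (intro always_eventually allI Pcl[OF r])
    have "y0 - r *\<^sub>R V0 - 1 *\<^sub>R U0 \<notin> Om" by (rule lim_notin[OF lim ev])
    moreover have "y0 - r *\<^sub>R V0 - 1 *\<^sub>R U0 \<in> closure Om" by (rule lim_cl[OF lim ev2])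
    ultimately show "y0 - r *\<^sub>R V0 - U0 \<in> frontier Om" using int_Om by (simp add: frontier_def)
  qed
  have neq: "y0 - U0 \<noteq> y0 - U0 - r0 *\<^sub>R V0" using V0d dl(1) r0(1) by auto
  have seg: "closed_segment (y0 - U0) (y0 - U0 - r0 *\<^sub>R V0) \<subseteq> frontier Om"
  proof
    fix p assume "p \<in> closed_segment (y0 - U0) (y0 - U0 - r0 *\<^sub>R V0)"
    then obtain th where th: "0 \<le> th" "th \<le> 1" "p = (1 - th) *\<^sub>R (y0 - U0) + th *\<^sub>R (y0 - U0 - r0 *\<^sub>R V0)"
      by (auto simp: closed_segment_def)
    have "p = y0 - (th * r0) *\<^sub>R V0 - U0" using th(3) by (simp add: algebra_simps)
    moreover have "0 \<le> th * r0" "th * r0 \<le> r0" using th r0 by (auto simp: mult_left_le_one_le)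
    ultimately show "p \<in> frontier Om" using front by simp
  qed
  show ?thesis
    by (rule exI[where x="y0 - U0"], rule exI[where x="y0 - U0 - r0 *\<^sub>R V0"]) (use neq seg in simp)
qed

end

context qh begin

lemma fwd_core:
  assumes u: "u \<in> AC" "u \<noteq> 0" and v: "v \<in> AC" and nm: "\<And>c. v \<noteq> c *\<^sub>R u"
  shows "\<exists>a b. a \<noteq> b \<and> closed_segment a b \<subseteq> frontier Om"
proof -
  define S where "S = {e. 0 \<le> e \<and> v - e *\<^sub>R u \<in> AC}"
  have down: "\<And>e e'. e \<in> S \<Longrightarrow> 0 \<le> e' \<Longrightarrow> e' \<le> e \<Longrightarrow> e' \<in> S"
  proof -
    fix e e' assume e: "e \<in> S" and e': "0 \<le> e'" "e' \<le> e"
    have eq: "v - e' *\<^sub>R u = (v - e *\<^sub>R u) + (e - e') *\<^sub>R u" by (simp add: algebra_simps)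
    have "(v - e *\<^sub>R u) + (e - e') *\<^sub>R u \<in> AC"
      using AC_add[OF _ AC_scale[OF u(1)]] e e' by (simp add: S_def)
    then have "v - e' *\<^sub>R u \<in> AC" unfolding eq[symmetric] .
    then show "e' \<in> S" using e' by (simp add: S_def)
  qed
  have ne: "0 \<in> S" using v by (simp add: S_def)
  have bdd: "\<exists>B. \<forall>e\<in>S. e \<le> B"
  proof (rule ccontr)
    assume H: "\<not> (\<exists>B. \<forall>e\<in>S. e \<le> B)"
    have inS: "\<And>n. real (Suc n) \<in> S"
    proof -
      fix n
      obtain e where e: "e \<in> S" "\<not> e \<le> real (Suc n)" using H by blast
      then show "real (Suc n) \<in> S" using down[OF e(1)] by simp
    qed
    have "\<And>n. inverse (real (Suc n)) *\<^sub>R v + (- u) \<in> AC"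
    proof -
      fix n
      have "inverse (real (Suc n)) *\<^sub>R (v - real (Suc n) *\<^sub>R u) \<in> AC"
        using AC_scale inS[of n] by (simp add: S_def)
      moreover have "inverse (real (Suc n)) *\<^sub>R (v - real (Suc n) *\<^sub>R u) = inverse (real (Suc n)) *\<^sub>R v + (- u)"
        by (simp add: scaleR_diff_right)
      ultimately show "inverse (real (Suc n)) *\<^sub>R v + (- u) \<in> AC" by simp
    qed
    then have "- u \<in> AC" by (rule lim_AC)
    then show False using AC_pointed u by blast
  qed
  then obtain B where B: "\<And>e. e \<in> S \<Longrightarrow> e \<le> B" by blast
  have bddS: "bdd_above S" using B by (rule bdd_above.I)
  define es where "es = Sup S"
  have es0: "0 \<le> es" unfolding es_def using cSup_upper[OF ne bddS] .
  have esS: "es \<in> S"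
  proof (cases "es = 0")
    case True then show ?thesis using ne by simp
  next
    case False
    then have esp: "es > 0" using es0 by simp
    have "\<And>n. inverse (real (Suc n)) *\<^sub>R (es *\<^sub>R u) + (v - es *\<^sub>R u) \<in> AC"
    proof -
      fix n
      define e where "e = es * (1 - inverse (real (Suc n)))"
      have i: "0 < inverse (real (Suc n))" "inverse (real (Suc n)) \<le> 1" by (auto simp: field_simps)
      have e0: "0 \<le> e" using esp i by (simp add: e_def)
      have "e < es" using esp i by (simp add: e_def)
      then obtain e' where "e' \<in> S" "e < e'" using less_cSup_iff[of S e] ne bddS unfolding es_def by blast
      then have "e \<in> S" using down e0 by (meson less_imp_le)
      then have "v - e *\<^sub>R u \<in> AC" by (simp add: S_def)
      moreover have "v - e *\<^sub>R u = inverse (real (Suc n)) *\<^sub>R (es *\<^sub>R u) + (v - es *\<^sub>R u)"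
        by (simp add: e_def algebra_simps)
      ultimately show "inverse (real (Suc n)) *\<^sub>R (es *\<^sub>R u) + (v - es *\<^sub>R u) \<in> AC" by simp
    qed
    then have "v - es *\<^sub>R u \<in> AC" by (rule lim_AC)
    then show ?thesis using es0 by (simp add: S_def)
  qed
  define v' where "v' = v - es *\<^sub>R u"
  have v'AC: "v' \<in> AC" using esS by (simp add: S_def v'_def)
  have H2: "\<And>e. e > 0 \<Longrightarrow> v' - e *\<^sub>R u \<notin> AC"
  proof
    fix e :: real assume e: "e > 0" and "v' - e *\<^sub>R u \<in> AC"
    then have "v - (es + e) *\<^sub>R u \<in> AC" by (simp add: v'_def algebra_simps)
    then have "es + e \<in> S" using es0 e by (simp add: S_def)
    then have "es + e \<le> es" unfolding es_def by (rule cSup_upper[OF _ bddS])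
    then show False using e by simp
  qed
  have v'0: "v' \<noteq> 0"
  proof
    assume "v' = 0"
    then have "v = es *\<^sub>R u" by (simp add: v'_def)
    then show False using nm by blast
  qed
  have H3: "\<exists>c>0. u - c *\<^sub>R v' \<notin> AC"
  proof (rule ccontr)
    assume H: "\<not> (\<exists>c>0. u - c *\<^sub>R v' \<notin> AC)"
    have "\<And>n. inverse (real (Suc n)) *\<^sub>R u + (- v') \<in> AC"
    proof -
      fix n
      have "u - real (Suc n) *\<^sub>R v' \<in> AC" using H by simp
      then have "inverse (real (Suc n)) *\<^sub>R (u - real (Suc n) *\<^sub>R v') \<in> AC"
        using AC_scale by simp
      moreover have "inverse (real (Suc n)) *\<^sub>R (u - real (Suc n) *\<^sub>R v') = inverse (real (Suc n)) *\<^sub>R u + (- v')"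
        by (simp add: scaleR_diff_right)
      ultimately show "inverse (real (Suc n)) *\<^sub>R u + (- v') \<in> AC" by simp
    qed
    then have "- v' \<in> AC" by (rule lim_AC)
    then show False using AC_pointed v'AC v'0 by blast
  qed
  then obtain c where c: "c > 0" "u - c *\<^sub>R v' \<notin> AC" by blast
  show ?thesis using fwd_main[OF u v'AC v'0 H2 c] by blast
qed

end

context qh begin

lemma pull_seq:
  assumes xin: "\<And>n. x n \<in> Om"
  obtains y Li where "\<And>n. y n \<in> K" "\<And>n. linear (Li n)"
    "\<And>n w. x n + w \<in> Om \<longleftrightarrow> y n + Li n w \<in> Om"
    "\<And>n w. x n + w \<in> closure Om \<longleftrightarrow> y n + Li n w \<in> closure Om"
    "\<And>n w. w \<in> AC \<Longrightarrow> Li n w \<in> AC"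
proof -
  have ex_p: "\<forall>n. \<exists>p. fst p \<in> K \<and> (linear (snd p) \<and> (\<forall>w. x n + w \<in> Om \<longleftrightarrow> fst p + snd p w \<in> Om) \<and>
    (\<forall>w. x n + w \<in> closure Om \<longleftrightarrow> fst p + snd p w \<in> closure Om) \<and> (\<forall>w\<in>AC. snd p w \<in> AC))"
  proof
    fix n
    obtain yy LL where yy: "yy \<in> K" and LL: "linear LL \<and> (\<forall>w. x n + w \<in> Om \<longleftrightarrow> yy + LL w \<in> Om) \<and>
      (\<forall>w. x n + w \<in> closure Om \<longleftrightarrow> yy + LL w \<in> closure Om) \<and> (\<forall>w\<in>AC. LL w \<in> AC)"
      using pull[OF xin[of n]] by (elim bexE exE)
    show "\<exists>p. fst p \<in> K \<and> (linear (snd p) \<and> (\<forall>w. x n + w \<in> Om \<longleftrightarrow> fst p + snd p w \<in> Om) \<and>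
      (\<forall>w. x n + w \<in> closure Om \<longleftrightarrow> fst p + snd p w \<in> closure Om) \<and> (\<forall>w\<in>AC. snd p w \<in> AC))"
      apply (rule exI[where x="(yy, LL)"])
      apply (simp only: fst_conv snd_conv)
      using yy LL by (rule conjI)
  qed
  obtain f where f: "\<forall>n. fst (f n) \<in> K \<and> (linear (snd (f n)) \<and> (\<forall>w. x n + w \<in> Om \<longleftrightarrow> fst (f n) + snd (f n) w \<in> Om) \<and>
    (\<forall>w. x n + w \<in> closure Om \<longleftrightarrow> fst (f n) + snd (f n) w \<in> closure Om) \<and> (\<forall>w\<in>AC. snd (f n) w \<in> AC))"
    using choice[OF ex_p] by (rule exE)
  define y where "y n = fst (f n)" for n
  define Li where "Li n = snd (f n)" for n
  have fn: "\<And>n. fst (f n) \<in> K \<and> (linear (snd (f n)) \<and> (\<forall>w. x n + w \<in> Om \<longleftrightarrow> fst (f n) + snd (f n) w \<in> Om) \<and>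
    (\<forall>w. x n + w \<in> closure Om \<longleftrightarrow> fst (f n) + snd (f n) w \<in> closure Om) \<and> (\<forall>w\<in>AC. snd (f n) w \<in> AC))"
    using f by (rule spec)
  have y: "\<And>n. y n \<in> K" unfolding y_def using fn by (rule conjunct1)
  have Li: "\<And>n. linear (Li n)" unfolding Li_def using fn by (rule conjunct1[OF conjunct2])
  have m1: "\<And>n w. x n + w \<in> Om \<longleftrightarrow> y n + Li n w \<in> Om"
    unfolding y_def Li_def using fn by (rule spec[OF conjunct1[OF conjunct2[OF conjunct2]]])
  have m2: "\<And>n w. x n + w \<in> closure Om \<longleftrightarrow> y n + Li n w \<in> closure Om"
    unfolding y_def Li_def using fn by (rule spec[OF conjunct1[OF conjunct2[OF conjunct2[OF conjunct2]]]])
  have m3: "\<And>n w. w \<in> AC \<Longrightarrow> Li n w \<in> AC"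
    unfolding Li_def using fn by (rule bspec[OF conjunct2[OF conjunct2[OF conjunct2[OF conjunct2]]]])
  show ?thesis using that[OF y Li m1 m2 m3] .
qed

lemma norm_lim_ge:
  assumes "X \<longlonglongrightarrow> l" "eventually (\<lambda>n. d \<le> norm (X n)) sequentially"
  shows "d \<le> norm l"
proof -
  obtain N where "\<And>n. n \<ge> N \<Longrightarrow> d \<le> norm (X n)" using assms(2) unfolding eventually_sequentially by blast
  then show ?thesis by (intro LIMSEQ_le_const[OF tendsto_norm[OF assms(1)]]) blast
qed

lemma ev_ge:
  fixes c :: real
  shows "eventually (\<lambda>n. c \<le> real n) sequentially"
proof -
  obtain N :: nat where "c \<le> real N" using real_arch_simple by blast
  then show ?thesis unfolding eventually_sequentially
    by (intro exI[where x=N] allI impI) (simp add: order_trans)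
qed

lemma corner:
  assumes u: "u \<in> AC" "u \<noteq> 0" and one: "\<And>w. w \<in> AC \<Longrightarrow> \<exists>t\<ge>0. w = t *\<^sub>R u"
    and q1: "\<And>s. 0 \<le> s \<Longrightarrow> s \<le> 1 \<Longrightarrow> q + s *\<^sub>R E \<notin> Om"
    and q2: "\<And>t. 0 \<le> t \<Longrightarrow> t \<le> 1 \<Longrightarrow> q + t *\<^sub>R u \<notin> Om"
    and q3: "q + E + u \<in> Om"
    and sq: "\<And>s t. 0 \<le> s \<Longrightarrow> s \<le> 1 \<Longrightarrow> 0 \<le> t \<Longrightarrow> t \<le> 1 \<Longrightarrow> q + s *\<^sub>R E + t *\<^sub>R u \<in> closure Om"
  shows False
proof -
  obtain dl where dl: "dl > 0" "\<And>y w. y \<in> K \<Longrightarrow> y + w \<notin> Om \<Longrightarrow> dl \<le> norm w" using delta by blast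
  obtain M where M: "M > 0" "\<And>y w. y \<in> K \<Longrightarrow> y + w \<in> closure Om \<Longrightarrow> y - w \<in> closure Om \<Longrightarrow> norm w \<le> M"
    using noline_bound by blast
  define k where "k n = real n + 2" for n
  have k: "\<And>n. k n \<ge> 2" by (simp add: k_def)
  define x where "x n = q + (1 / k n) *\<^sub>R (E + u)" for n
  have qcl: "q \<in> closure Om" using sq[of 0 0] by simp
  have xin: "\<And>n. x n \<in> Om"
  proof -
    fix n
    have "q + (1 / k n) *\<^sub>R ((q + E + u) - q) \<in> Om" using shrink[OF q3 qcl, of "1 / k n"] k[of n] by simp
    then show "x n \<in> Om" by (simp add: x_def)
  qed
  obtain y Li where y: "\<And>n. y n \<in> K" and Li: "\<And>n. linear (Li n)"
    and m1: "\<And>n w. x n + w \<in> Om \<longleftrightarrow> y n + Li n w \<in> Om"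
    and m2: "\<And>n w. x n + w \<in> closure Om \<longleftrightarrow> y n + Li n w \<in> closure Om"
    and m3: "\<And>n w. w \<in> AC \<Longrightarrow> Li n w \<in> AC"
    using pull_seq[where x=x, OF xin] by blast
  have yOm: "\<And>n. y n \<in> Om" using y KOm by blast
  define A where "A n = (1 / k n) *\<^sub>R Li n E" for n
  define B where "B n = (1 / k n) *\<^sub>R Li n u" for n
  have Qeq: "\<And>n a b. y n + a *\<^sub>R A n + b *\<^sub>R B n = y n + Li n ((a / k n) *\<^sub>R E + (b / k n) *\<^sub>R u)"
  proof -
    fix n a b
    have "Li n ((a / k n) *\<^sub>R E + (b / k n) *\<^sub>R u) = (a / k n) *\<^sub>R Li n E + (b / k n) *\<^sub>R Li n u"
      using linear_add[OF Li[of n]] linear_scale[OF Li[of n]] by simp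
    then show "y n + a *\<^sub>R A n + b *\<^sub>R B n = y n + Li n ((a / k n) *\<^sub>R E + (b / k n) *\<^sub>R u)"
      by (simp add: A_def B_def add.assoc)
  qed
  have Xeq: "\<And>n a b. x n + ((a / k n) *\<^sub>R E + (b / k n) *\<^sub>R u) = q + ((a + 1) / k n) *\<^sub>R E + ((b + 1) / k n) *\<^sub>R u"
  proof -
    fix n a b
    have "x n + ((a / k n) *\<^sub>R E + (b / k n) *\<^sub>R u) = q + (1 / k n + a / k n) *\<^sub>R E + (1 / k n + b / k n) *\<^sub>R u"
      by (simp add: x_def scaleR_add_left scaleR_add_right algebra_simps)
    also have "1 / k n + a / k n = (a + 1) / k n" by (simp add: add_divide_distrib)
    also have "1 / k n + b / k n = (b + 1) / k n" by (simp add: add_divide_distrib)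
    finally show "x n + ((a / k n) *\<^sub>R E + (b / k n) *\<^sub>R u) = q + ((a + 1) / k n) *\<^sub>R E + ((b + 1) / k n) *\<^sub>R u" .
  qed
  have Q1: "\<And>n a b. y n + a *\<^sub>R A n + b *\<^sub>R B n \<in> Om \<longleftrightarrow> q + ((a + 1) / k n) *\<^sub>R E + ((b + 1) / k n) *\<^sub>R u \<in> Om"
    by (simp only: Qeq m1[symmetric] Xeq)
  have Q2: "\<And>n a b. y n + a *\<^sub>R A n + b *\<^sub>R B n \<in> closure Om \<longleftrightarrow> q + ((a + 1) / k n) *\<^sub>R E + ((b + 1) / k n) *\<^sub>R u \<in> closure Om"
    by (simp only: Qeq m2[symmetric] Xeq)
  have kpos: "\<And>n. k n > 0" using k by (smt (verit))
  have A1: "\<And>n. dl \<le> norm (A n)"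
  proof -
    fix n
    have "q + (1 / k n) *\<^sub>R u \<notin> Om" using q2[of "1 / k n"] k[of n] by simp
    then have "y n + (-1) *\<^sub>R A n + 0 *\<^sub>R B n \<notin> Om" using Q1[of n "-1" 0] by simp
    then have "y n + (- A n) \<notin> Om" by simp
    then show "dl \<le> norm (A n)" using dl(2)[OF y] by fastforce
  qed
  have B1: "\<And>n. dl \<le> norm (B n)"
  proof -
    fix n
    have "q + (1 / k n) *\<^sub>R E \<notin> Om" using q1[of "1 / k n"] k[of n] by simp
    then have "y n + 0 *\<^sub>R A n + (-1) *\<^sub>R B n \<notin> Om" using Q1[of n 0 "-1"] by simp
    then have "y n + (- B n) \<notin> Om" by simp
    then show "dl \<le> norm (B n)" using dl(2)[OF y] by fastforce
  qed
  have AM: "\<And>n. norm (A n) \<le> M"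
  proof -
    fix n
    have "q + (2 / k n) *\<^sub>R E + (1 / k n) *\<^sub>R u \<in> closure Om" using sq[of "2 / k n" "1 / k n"] k[of n] by simp
    then have "y n + 1 *\<^sub>R A n + 0 *\<^sub>R B n \<in> closure Om" using Q2[of n 1 0] by simp
    then have a: "y n + A n \<in> closure Om" by simp
    have "q + 0 *\<^sub>R E + (1 / k n) *\<^sub>R u \<in> closure Om" using sq[of 0 "1 / k n"] k[of n] by simp
    then have "y n + (-1) *\<^sub>R A n + 0 *\<^sub>R B n \<in> closure Om" using Q2[of n "-1" 0] by simp
    then have b: "y n - A n \<in> closure Om" by simp
    show "norm (A n) \<le> M" using M(2)[OF y a b] .
  qed
  have BM: "\<And>n. norm (B n) \<le> M"
  proof -
    fix n
    have "q + (1 / k n) *\<^sub>R E + (2 / k n) *\<^sub>R u \<in> closure Om" using sq[of "1 / k n" "2 / k n"] k[of n] by simp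
    then have "y n + 0 *\<^sub>R A n + 1 *\<^sub>R B n \<in> closure Om" using Q2[of n 0 1] by simp
    then have a: "y n + B n \<in> closure Om" by simp
    have "q + (1 / k n) *\<^sub>R E + 0 *\<^sub>R u \<in> closure Om" using sq[of "1 / k n" 0] k[of n] by simp
    then have "y n + 0 *\<^sub>R A n + (-1) *\<^sub>R B n \<in> closure Om" using Q2[of n 0 "-1"] by simp
    then have b: "y n - B n \<in> closure Om" by simp
    show "norm (B n) \<le> M" using M(2)[OF y a b] .
  qed
  have evk: "\<And>c. eventually (\<lambda>n. c \<le> k n) sequentially"
  proof -
    fix c :: real
    show "eventually (\<lambda>n. c \<le> k n) sequentially"
      using ev_ge[of c] by eventually_elim (simp add: k_def)
  qed
  have rayA: "\<And>s. 0 \<le> s \<Longrightarrow> eventually (\<lambda>n. y n + s *\<^sub>R A n \<in> closure Om) sequentially"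
  proof -
    fix s :: real assume s: "0 \<le> s"
    show "eventually (\<lambda>n. y n + s *\<^sub>R A n \<in> closure Om) sequentially"
      using evk[of "s + 1"]
    proof eventually_elim
      case (elim n)
      have "q + ((s + 1) / k n) *\<^sub>R E + ((0 + 1) / k n) *\<^sub>R u \<in> closure Om"
        using sq[of "(s + 1) / k n" "1 / k n"] elim kpos[of n] k[of n] s by (simp add: divide_le_eq_1_pos)
      then have "y n + s *\<^sub>R A n + 0 *\<^sub>R B n \<in> closure Om" using Q2[of n s 0] by simp
      then show ?case by simp
    qed
  qed
  have rayB: "\<And>s. 0 \<le> s \<Longrightarrow> eventually (\<lambda>n. y n + s *\<^sub>R B n \<in> closure Om) sequentially"
  proof -
    fix s :: real assume s: "0 \<le> s"
    show "eventually (\<lambda>n. y n + s *\<^sub>R B n \<in> closure Om) sequentially"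
      using evk[of "s + 1"]
    proof eventually_elim
      case (elim n)
      have "q + ((0 + 1) / k n) *\<^sub>R E + ((s + 1) / k n) *\<^sub>R u \<in> closure Om"
        using sq[of "1 / k n" "(s + 1) / k n"] elim kpos[of n] k[of n] s by (simp add: divide_le_eq_1_pos)
      then have "y n + 0 *\<^sub>R A n + s *\<^sub>R B n \<in> closure Om" using Q2[of n 0 s] by simp
      then show ?case by simp
    qed
  qed
  have botA: "\<And>s. 0 \<le> s \<Longrightarrow> eventually (\<lambda>n. y n + s *\<^sub>R A n + (-1) *\<^sub>R B n \<notin> Om) sequentially"
  proof -
    fix s :: real assume s: "0 \<le> s"
    show "eventually (\<lambda>n. y n + s *\<^sub>R A n + (-1) *\<^sub>R B n \<notin> Om) sequentially"
      using evk[of "s + 1"]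
    proof eventually_elim
      case (elim n)
      have "q + ((s + 1) / k n) *\<^sub>R E \<notin> Om"
        using q1[of "(s + 1) / k n"] elim kpos[of n] s by (simp add: divide_le_eq_1_pos)
      then show ?case using Q1[of n s "-1"] by simp
    qed
  qed
  have ev1: "eventually (\<lambda>n. y n \<in> K) sequentially" by (intro always_eventually allI y)
  have ev2: "eventually (\<lambda>n. A n \<in> cball 0 M) sequentially" by (intro always_eventually allI) (simp add: AM)
  have ev3: "eventually (\<lambda>n. B n \<in> cball 0 M) sequentially" by (intro always_eventually allI) (simp add: BM)
  obtain ph y0 A0 B0 where R: "strict_mono ph" "y0 \<in> K" "A0 \<in> cball 0 M" "B0 \<in> cball 0 M"
    "(\<lambda>n. y (ph n)) \<longlonglongrightarrow> y0" "(\<lambda>n. A (ph n)) \<longlonglongrightarrow> A0" "(\<lambda>n. B (ph n)) \<longlonglongrightarrow> B0"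
    using extract3[OF cK compact_cball[of 0 M] compact_cball[of 0 M] ev1 ev2 ev3] by blast
  have y0: "y0 \<in> Om" using R(2) KOm by blast
  have A0d: "dl \<le> norm A0" by (rule norm_lim_ge[OF R(6)]) (intro always_eventually allI A1)
  have B0d: "dl \<le> norm B0" by (rule norm_lim_ge[OF R(7)]) (intro always_eventually allI B1)
  have A0AC: "A0 \<in> AC"
  proof (rule L_rec[OF y0])
    fix s :: real assume s: "0 \<le> s"
    show "y0 + s *\<^sub>R A0 \<in> closure Om"
      by (rule lim_cl[OF _ ev_subseq[OF R(1) rayA[OF s]]]) (intro tendsto_intros R)
  qed
  have B0AC: "B0 \<in> AC"
  proof (rule L_rec[OF y0])
    fix s :: real assume s: "0 \<le> s"
    show "y0 + s *\<^sub>R B0 \<in> closure Om"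
      by (rule lim_cl[OF _ ev_subseq[OF R(1) rayB[OF s]]]) (intro tendsto_intros R)
  qed
  obtain al where al: "al \<ge> 0" "A0 = al *\<^sub>R u" using one[OF A0AC] by blast
  obtain be where be: "be \<ge> 0" "B0 = be *\<^sub>R u" using one[OF B0AC] by blast
  have alp: "al > 0" using al A0d dl(1) by (cases "al = 0") auto
  define s where "s = be / al"
  have s: "0 \<le> s" using be alp by (simp add: s_def)
  have "y0 + s *\<^sub>R A0 + (-1) *\<^sub>R B0 \<notin> Om"
    by (rule lim_notin[OF _ ev_subseq[OF R(1) botA[OF s]]]) (intro tendsto_intros R)
  moreover have "y0 + s *\<^sub>R A0 + (-1) *\<^sub>R B0 = y0" using alp by (simp add: al be s_def)
  ultimately show False using y0 by simp
qed

end

context qh begin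

lemma endpoint:
  assumes u: "u \<in> AC" "u \<noteq> 0" and one: "\<And>w. w \<in> AC \<Longrightarrow> \<exists>t\<ge>0. w = t *\<^sub>R u"
    and lpos: "l > 0"
    and bot: "\<And>X. 0 \<le> X \<Longrightarrow> X \<le> l \<Longrightarrow> q - X *\<^sub>R E \<notin> Om \<and> q - X *\<^sub>R E \<in> closure Om"
    and right: "\<And>X. X > 0 \<Longrightarrow> q + X *\<^sub>R E \<notin> closure Om"
    and up: "\<And>t. t > 0 \<Longrightarrow> q + t *\<^sub>R u \<in> Om"
  shows False
proof -
  obtain dl where dl: "dl > 0" "\<And>y w. y \<in> K \<Longrightarrow> y + w \<notin> Om \<Longrightarrow> dl \<le> norm w" using delta by blast
  obtain M where M: "M > 0" "\<And>y w. y \<in> K \<Longrightarrow> y + w \<in> closure Om \<Longrightarrow> y - w \<in> closure Om \<Longrightarrow> norm w \<le> M"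
    using noline_bound by blast
  have qcl: "q \<in> closure Om" and qn: "q \<notin> Om" using bot[of 0] lpos by auto
  have EAC: "E \<notin> AC"
  proof
    assume "E \<in> AC"
    then have "q + 1 *\<^sub>R E \<in> closure Om" by (rule AC_cl[OF _ qcl]) simp
    then show False using right[of 1] by simp
  qed
  define k where "k n = real n + 1" for n
  have kpos: "\<And>n. k n > 0" by (simp add: k_def add_nonneg_pos)
  define x where "x n = q + (1 / k n) *\<^sub>R u" for n
  have xin: "\<And>n. x n \<in> Om" unfolding x_def using up kpos by simp
  define r where "r n = ex (x n) E" for n
  have rpos: "\<And>n. r n > 0" unfolding r_def using ex_pos[OF xin EAC] .
  have rout: "\<And>n. x n + r n *\<^sub>R E \<notin> Om" unfolding r_def using ex_out[OF xin EAC] .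
  have rcl: "\<And>n. x n + r n *\<^sub>R E \<in> closure Om" unfolding r_def using ex_cl[OF xin EAC] .
  have r0: "\<And>e. e > 0 \<Longrightarrow> eventually (\<lambda>n. r n \<le> e) sequentially"
  proof -
    fix e :: real assume e: "e > 0"
    have "q + e *\<^sub>R E \<in> - closure Om" using right[OF e] by simp
    then obtain eta where eta: "eta > 0" "ball (q + e *\<^sub>R E) eta \<subseteq> - closure Om"
      using open_contains_ball[of "- closure Om"] by blast
    have ev: "eventually (\<lambda>n. norm u / eta + 1 \<le> real n) sequentially" by (rule ev_ge)
    show "eventually (\<lambda>n. r n \<le> e) sequentially"
      using ev
    proof eventually_elim
      case (elim n)
      have "norm ((1 / k n) *\<^sub>R u) < eta"
      proof -
        have "norm ((1 / k n) *\<^sub>R u) = norm u / k n" using kpos[of n] by simp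
        also have "\<dots> < eta"
        proof -
          have "norm u < eta * k n"
          proof -
            have "norm u / eta < real n + 1" using elim by simp
            then have "norm u < (real n + 1) * eta" using eta by (simp add: divide_less_eq)
            then show ?thesis by (simp add: k_def mult.commute)
          qed
          then show ?thesis using kpos[of n] by (simp add: divide_less_eq)
        qed
        finally show ?thesis .
      qed
      then have "x n + e *\<^sub>R E \<in> ball (q + e *\<^sub>R E) eta"
        by (simp add: x_def dist_norm algebra_simps)
      then have "x n + e *\<^sub>R E \<notin> Om" using eta(2) closure_subset by blast
      then show "r n \<le> e" using ex_iff[OF xin EAC, of e n] e unfolding r_def by (simp add: not_less)
    qed
  qed
  have rl: "\<And>s. 0 \<le> s \<Longrightarrow> eventually (\<lambda>n. s * r n \<le> l) sequentially"
  proof -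
    fix s :: real assume s: "0 \<le> s"
    show "eventually (\<lambda>n. s * r n \<le> l) sequentially"
    proof (cases "s = 0")
      case True then show ?thesis using lpos by simp
    next
      case False
      then have sp: "s > 0" using s by simp
      show ?thesis using r0[of "l / s"] sp lpos
      proof -
        have "eventually (\<lambda>n. r n \<le> l / s) sequentially" using r0[of "l / s"] sp lpos by simp
        then show ?thesis
        proof eventually_elim
          case (elim n) then show ?case using sp by (simp add: le_divide_eq mult.commute)
        qed
      qed
    qed
  qed
  obtain y Li where y: "\<And>n. y n \<in> K" and Li: "\<And>n. linear (Li n)"
    and m1: "\<And>n w. x n + w \<in> Om \<longleftrightarrow> y n + Li n w \<in> Om"
    and m2: "\<And>n w. x n + w \<in> closure Om \<longleftrightarrow> y n + Li n w \<in> closure Om"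
    and m3: "\<And>n w. w \<in> AC \<Longrightarrow> Li n w \<in> AC"
    using pull_seq[where x=x, OF xin] by blast
  have yOm: "\<And>n. y n \<in> Om" using y KOm by blast
  define R where "R n = r n *\<^sub>R Li n E" for n
  define U where "U n = (1 / k n) *\<^sub>R Li n u" for n
  have Qeq: "\<And>n a b. y n + a *\<^sub>R R n + b *\<^sub>R U n = y n + Li n ((a * r n) *\<^sub>R E + (b / k n) *\<^sub>R u)"
  proof -
    fix n a b
    have "Li n ((a * r n) *\<^sub>R E + (b / k n) *\<^sub>R u) = (a * r n) *\<^sub>R Li n E + (b / k n) *\<^sub>R Li n u"
      using linear_add[OF Li[of n]] linear_scale[OF Li[of n]] by simp
    then show "y n + a *\<^sub>R R n + b *\<^sub>R U n = y n + Li n ((a * r n) *\<^sub>R E + (b / k n) *\<^sub>R u)"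
      by (simp add: R_def U_def add.assoc)
  qed
  have Xeq: "\<And>n a b. x n + ((a * r n) *\<^sub>R E + (b / k n) *\<^sub>R u) = q + (a * r n) *\<^sub>R E + ((b + 1) / k n) *\<^sub>R u"
  proof -
    fix n a b
    have "x n + ((a * r n) *\<^sub>R E + (b / k n) *\<^sub>R u) = q + (a * r n) *\<^sub>R E + (1 / k n + b / k n) *\<^sub>R u"
      by (simp add: x_def scaleR_add_left algebra_simps)
    also have "1 / k n + b / k n = (b + 1) / k n" by (simp add: add_divide_distrib)
    finally show "x n + ((a * r n) *\<^sub>R E + (b / k n) *\<^sub>R u) = q + (a * r n) *\<^sub>R E + ((b + 1) / k n) *\<^sub>R u" .
  qed
  have Q1: "\<And>n a b. y n + a *\<^sub>R R n + b *\<^sub>R U n \<in> Om \<longleftrightarrow> q + (a * r n) *\<^sub>R E + ((b + 1) / k n) *\<^sub>R u \<in> Om"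
    by (simp only: Qeq m1[symmetric] Xeq)
  have Q2: "\<And>n a b. y n + a *\<^sub>R R n + b *\<^sub>R U n \<in> closure Om \<longleftrightarrow> q + (a * r n) *\<^sub>R E + ((b + 1) / k n) *\<^sub>R u \<in> closure Om"
    by (simp only: Qeq m2[symmetric] Xeq)
  have R1: "\<And>n. dl \<le> norm (R n)"
  proof -
    fix n
    have "q + (1 * r n) *\<^sub>R E + ((0 + 1) / k n) *\<^sub>R u \<notin> Om" using rout[of n] by (simp add: x_def algebra_simps)
    then have "y n + 1 *\<^sub>R R n + 0 *\<^sub>R U n \<notin> Om" using Q1[of n 1 0] by blast
    then show "dl \<le> norm (R n)" using dl(2)[OF y] by simp
  qed
  have Ra: "\<And>n. y n + R n \<in> closure Om"
  proof -
    fix n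
    have "q + (1 * r n) *\<^sub>R E + ((0 + 1) / k n) *\<^sub>R u \<in> closure Om" using rcl[of n] by (simp add: x_def algebra_simps)
    then have "y n + 1 *\<^sub>R R n + 0 *\<^sub>R U n \<in> closure Om" using Q2[of n 1 0] by blast
    then show "y n + R n \<in> closure Om" by simp
  qed
  have rayR: "\<And>s. 0 \<le> s \<Longrightarrow> eventually (\<lambda>n. y n + (- s) *\<^sub>R R n \<in> closure Om) sequentially"
  proof -
    fix s :: real assume s: "0 \<le> s"
    show "eventually (\<lambda>n. y n + (- s) *\<^sub>R R n \<in> closure Om) sequentially"
      using rl[OF s]
    proof eventually_elim
      case (elim n)
      have "q - (s * r n) *\<^sub>R E \<in> closure Om" using bot[of "s * r n"] elim s rpos[of n] by simp
      then have "(q - (s * r n) *\<^sub>R E) + (1 / k n) *\<^sub>R u \<in> closure Om"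
        using AC_cl[OF u(1)] kpos[of n] by simp
      then have "q + (- s * r n) *\<^sub>R E + ((0 + 1) / k n) *\<^sub>R u \<in> closure Om" by (simp add: algebra_simps)
      then have "y n + (- s) *\<^sub>R R n + 0 *\<^sub>R U n \<in> closure Om" using Q2[of n "- s" 0] by blast
      then show ?case by simp
    qed
  qed
  have RM: "eventually (\<lambda>n. norm (R n) \<le> M) sequentially"
  proof -
    have "eventually (\<lambda>n. y n + (- 1) *\<^sub>R R n \<in> closure Om) sequentially" using rayR[of 1] by simp
    then show ?thesis by eventually_elim (use M(2)[OF y Ra] in simp)
  qed
  have U1: "\<And>n. dl \<le> norm (U n)"
  proof -
    fix n
    have "q + (0 * r n) *\<^sub>R E + ((-1 + 1) / k n) *\<^sub>R u \<notin> Om" using qn by simp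
    then have "y n + 0 *\<^sub>R R n + (-1) *\<^sub>R U n \<notin> Om" using Q1[of n 0 "-1"] by blast
    then show "dl \<le> norm (U n)" using dl(2)[OF y[of n], of "- U n"] by simp
  qed
  have UM: "\<And>n. norm (U n) \<le> M"
  proof -
    fix n
    have "q + (0 * r n) *\<^sub>R E + ((-1 + 1) / k n) *\<^sub>R u \<in> closure Om" using qcl by simp
    then have "y n + 0 *\<^sub>R R n + (-1) *\<^sub>R U n \<in> closure Om" using Q2[of n 0 "-1"] by blast
    then have a: "y n - U n \<in> closure Om" by simp
    have "U n \<in> AC" unfolding U_def using AC_scale[OF m3[OF u(1)]] kpos[of n] by simp
    then have b: "y n + U n \<in> closure Om" using AC_D1 yOm closure_subset by blast
    show "norm (U n) \<le> M" using M(2)[OF y b a] .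
  qed
  have UAC: "\<And>n. U n \<in> AC" unfolding U_def using AC_scale[OF m3[OF u(1)]] kpos by (simp add: less_imp_le)
  have botR: "\<And>s. 0 \<le> s \<Longrightarrow> eventually (\<lambda>n. y n + (- s) *\<^sub>R R n + (-1) *\<^sub>R U n \<notin> Om) sequentially"
  proof -
    fix s :: real assume s: "0 \<le> s"
    show "eventually (\<lambda>n. y n + (- s) *\<^sub>R R n + (-1) *\<^sub>R U n \<notin> Om) sequentially"
      using rl[OF s]
    proof eventually_elim
      case (elim n)
      have "q - (s * r n) *\<^sub>R E \<notin> Om" using bot[of "s * r n"] elim s rpos[of n] by simp
      then have "q + (- s * r n) *\<^sub>R E + ((-1 + 1) / k n) *\<^sub>R u \<notin> Om" by (simp add: algebra_simps)
      then show ?case using Q1[of n "- s" "-1"] by blast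
    qed
  qed
  have ev1: "eventually (\<lambda>n. y n \<in> K) sequentially" by (intro always_eventually allI y)
  have ev2: "eventually (\<lambda>n. R n \<in> cball 0 M) sequentially" using RM by eventually_elim simp
  have ev3: "eventually (\<lambda>n. U n \<in> cball 0 M) sequentially" by (intro always_eventually allI) (simp add: UM)
  obtain ph y0 R0 U0 where X: "strict_mono ph" "y0 \<in> K" "R0 \<in> cball 0 M" "U0 \<in> cball 0 M"
    "(\<lambda>n. y (ph n)) \<longlonglongrightarrow> y0" "(\<lambda>n. R (ph n)) \<longlonglongrightarrow> R0" "(\<lambda>n. U (ph n)) \<longlonglongrightarrow> U0"
    using extract3[OF cK compact_cball[of 0 M] compact_cball[of 0 M] ev1 ev2 ev3] by blast
  have y0: "y0 \<in> Om" using X(2) KOm by blast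
  have R0d: "dl \<le> norm R0" by (rule norm_lim_ge[OF X(6)]) (intro always_eventually allI R1)
  have U0d: "dl \<le> norm U0" by (rule norm_lim_ge[OF X(7)]) (intro always_eventually allI U1)
  have mR0: "- R0 \<in> AC"
  proof (rule L_rec[OF y0])
    fix s :: real assume s: "0 \<le> s"
    have "y0 + (- s) *\<^sub>R R0 \<in> closure Om"
      by (rule lim_cl[OF _ ev_subseq[OF X(1) rayR[OF s]]]) (intro tendsto_intros X)
    then show "y0 + s *\<^sub>R (- R0) \<in> closure Om" by simp
  qed
  have U0AC: "U0 \<in> AC"
    by (rule lim_in[OF AC_closed X(7)]) (intro always_eventually allI UAC)
  obtain rho where rho: "rho \<ge> 0" "- R0 = rho *\<^sub>R u" using one[OF mR0] by blast
  obtain c where c: "c \<ge> 0" "U0 = c *\<^sub>R u" using one[OF U0AC] by blast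
  have rhop: "rho > 0"
  proof (rule ccontr)
    assume "\<not> rho > 0"
    then have "rho = 0" using rho(1) by simp
    then have "R0 = 0" using rho(2) by (metis neg_equal_0_iff_equal scaleR_zero_left)
    then show False using R0d dl(1) by simp
  qed
  define s where "s = c / rho"
  have s: "0 \<le> s" using c rhop by (simp add: s_def)
  have "y0 + (- s) *\<^sub>R R0 + (-1) *\<^sub>R U0 \<notin> Om"
    by (rule lim_notin[OF _ ev_subseq[OF X(1) botR[OF s]]]) (intro tendsto_intros X)
  moreover have "y0 + (- s) *\<^sub>R R0 + (-1) *\<^sub>R U0 = y0"
  proof -
    have "(- s) *\<^sub>R R0 = s *\<^sub>R (- R0)" by simp
    also have "\<dots> = (s * rho) *\<^sub>R u" using rho(2) by simp
    also have "s * rho = c" using rhop by (simp add: s_def)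
    finally have "(- s) *\<^sub>R R0 = c *\<^sub>R u" .
    then show ?thesis using c(2) by simp
  qed
  ultimately show False using y0 by metis
qed

end

context qh begin

lemma step2:
  assumes u: "u \<in> AC" "u \<noteq> 0" and one: "\<And>w. w \<in> AC \<Longrightarrow> \<exists>t\<ge>0. w = t *\<^sub>R u"
    and pcl: "p \<in> closure Om" and pn: "p \<notin> Om" and pE: "p + E \<in> closure Om" and mE: "p - E \<in> closure Om"
    and nm: "\<And>c. E \<noteq> c *\<^sub>R u" and up: "\<And>t. t > 0 \<Longrightarrow> p + t *\<^sub>R u \<in> Om"
  shows False
proof -
  have line: "\<And>s. p + s *\<^sub>R E \<notin> Om"
  proof
    fix s assume ps: "p + s *\<^sub>R E \<in> Om"
    consider "s > 0" | "s < 0" | "s = 0" by linarith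
    then show False
    proof cases
      case 1
      have th: "0 \<le> s / (s + 1)" "s / (s + 1) < 1" using 1 by (auto simp: divide_less_eq_1_pos)
      have "(p + s *\<^sub>R E) + (s / (s + 1)) *\<^sub>R ((p - E) - (p + s *\<^sub>R E)) \<in> Om"
        using seg_Om[OF ps mE th] .
      moreover have "(s / (s + 1)) *\<^sub>R ((p - E) - (p + s *\<^sub>R E)) = - (s *\<^sub>R E)"
      proof -
        have "(p - E) - (p + s *\<^sub>R E) = (- (1 + s)) *\<^sub>R E" by (simp add: algebra_simps)
        then have "(s / (s + 1)) *\<^sub>R ((p - E) - (p + s *\<^sub>R E)) = ((s / (s + 1)) * (- (1 + s))) *\<^sub>R E" by simp
        also have "(s / (s + 1)) * (- (1 + s)) = - s" using 1 by (simp add: field_simps)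
        finally show ?thesis by simp
      qed
      ultimately show False using pn by simp
    next
      case 2
      have d: "1 - s > 0" using 2 by simp
      have th1: "0 \<le> (- s) / (1 - s)" by (rule divide_nonneg_pos) (use 2 d in auto)
      have th2: "(- s) / (1 - s) < 1" using d by (subst divide_less_eq_1_pos) auto
      note th = th1 th2
      have "(p + s *\<^sub>R E) + ((- s) / (1 - s)) *\<^sub>R ((p + E) - (p + s *\<^sub>R E)) \<in> Om"
        using seg_Om[OF ps pE th] .
      moreover have "((- s) / (1 - s)) *\<^sub>R ((p + E) - (p + s *\<^sub>R E)) = - (s *\<^sub>R E)"
      proof -
        have "(p + E) - (p + s *\<^sub>R E) = (1 - s) *\<^sub>R E" by (simp add: algebra_simps)
        then have "((- s) / (1 - s)) *\<^sub>R ((p + E) - (p + s *\<^sub>R E)) = (((- s) / (1 - s)) * (1 - s)) *\<^sub>R E" by simp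
        also have "((- s) / (1 - s)) * (1 - s) = - s" using 2 by (simp add: field_simps)
        finally show ?thesis by simp
      qed
      ultimately show False using pn by simp
    next
      case 3 then show False using ps pn by simp
    qed
  qed
  have EAC: "E \<notin> AC"
  proof
    assume "E \<in> AC"
    then obtain t where "E = t *\<^sub>R u" using one by blast
    then show False using nm by blast
  qed
  obtain T where T: "0 \<le> T" "p + T *\<^sub>R E \<notin> closure Om"
    using L_rec'[OF pcl, of E] EAC by blast
  have Tp: "T > 0"
  proof (rule ccontr)
    assume "\<not> T > 0"
    then have "T = 0" using T(1) by simp
    then show False using T(2) pcl by simp
  qed
  define S where "S = {s. 0 \<le> s \<and> p + s *\<^sub>R E \<in> closure Om}"
  have oneS: "1 \<in> S" using pE by (simp add: S_def)
  have Sbd: "\<And>s. s \<in> S \<Longrightarrow> s < T"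
  proof (rule ccontr)
    fix s assume s: "s \<in> S" and "\<not> s < T"
    then have sT: "T \<le> s" by simp
    then have sp: "s > 0" using Tp by simp
    have sc: "p + s *\<^sub>R E \<in> closure Om" using s by (simp add: S_def)
    have "p + (T / s) *\<^sub>R ((p + s *\<^sub>R E) - p) \<in> closure Om"
      using seg_cl[OF pcl sc, of "T / s"] sT sp Tp by (simp add: divide_le_eq_1_pos)
    then have "p + T *\<^sub>R E \<in> closure Om" using sp by simp
    then show False using T(2) by simp
  qed
  have bddS: "bdd_above S" using Sbd by (meson bdd_above.I less_imp_le)
  define sp where "sp = Sup S"
  have sp1: "1 \<le> sp" unfolding sp_def using cSup_upper[OF oneS bddS] .
  have spcl: "p + sp *\<^sub>R E \<in> closure Om"
  proof -
    have "p + sp *\<^sub>R E \<in> closure (closure Om)" unfolding closure_approachable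
    proof (intro allI impI)
      fix e :: real assume e: "e > 0"
      have np: "norm E + 1 > 0" by (simp add: add_nonneg_pos)
      have "sp - e / (norm E + 1) < sp" using e np by simp
      then obtain s where s: "s \<in> S" "sp - e / (norm E + 1) < s"
        using less_cSup_iff[of S] oneS bddS unfolding sp_def by blast
      have ssp: "s \<le> sp" unfolding sp_def using cSup_upper[OF s(1) bddS] .
      have "dist (p + s *\<^sub>R E) (p + sp *\<^sub>R E) = (sp - s) * norm E"
      proof -
        have "dist (p + s *\<^sub>R E) (p + sp *\<^sub>R E) = norm ((s - sp) *\<^sub>R E)" by (simp add: dist_norm scaleR_diff_left)
        also have "\<dots> = (sp - s) * norm E" using ssp by simp
        finally show ?thesis .
      qed
      also have "\<dots> \<le> (e / (norm E + 1)) * norm E" using s(2) by (intro mult_right_mono) auto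
      also have "\<dots> < e"
      proof -
        have "(e / (norm E + 1)) * norm E = e * (norm E / (norm E + 1))" by simp
        also have "norm E / (norm E + 1) < 1" using np by (subst divide_less_eq_1_pos) auto
        then have "e * (norm E / (norm E + 1)) < e * 1" using e by (intro mult_strict_left_mono) auto
        finally show ?thesis by simp
      qed
      finally have dd: "dist (p + s *\<^sub>R E) (p + sp *\<^sub>R E) < e" .
      have "p + s *\<^sub>R E \<in> closure Om" using s(1) by (simp add: S_def)
      then show "\<exists>y\<in>closure Om. dist y (p + sp *\<^sub>R E) < e" using dd by (rule bexI[rotated])
    qed
    then show ?thesis by simp
  qed
  define q where "q = p + sp *\<^sub>R E"
  have qcl: "q \<in> closure Om" using spcl by (simp add: q_def)
  have qn: "q \<notin> Om" unfolding q_def by (rule line)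
  have right: "\<And>X. X > 0 \<Longrightarrow> q + X *\<^sub>R E \<notin> closure Om"
  proof
    fix X :: real assume X: "X > 0" and c: "q + X *\<^sub>R E \<in> closure Om"
    have "p + (sp + X) *\<^sub>R E \<in> closure Om" using c by (simp add: q_def scaleR_add_left add.assoc)
    then have "sp + X \<in> S" using sp1 X by (simp add: S_def)
    then have "sp + X \<le> sp" unfolding sp_def by (rule cSup_upper[OF _ bddS])
    then show False using X by simp
  qed
  have bot: "\<And>X. 0 \<le> X \<Longrightarrow> X \<le> sp + 1 \<Longrightarrow> q - X *\<^sub>R E \<notin> Om \<and> q - X *\<^sub>R E \<in> closure Om"
  proof -
    fix X :: real assume X: "0 \<le> X" "X \<le> sp + 1"
    have eq: "q - X *\<^sub>R E = p + (sp - X) *\<^sub>R E" by (simp add: q_def scaleR_diff_left)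
    have n: "q - X *\<^sub>R E \<notin> Om" unfolding eq by (rule line)
    have c: "q - X *\<^sub>R E \<in> closure Om"
    proof (cases "X \<le> sp")
      case True
      have th: "0 \<le> (sp - X) / sp" "(sp - X) / sp \<le> 1" using True X sp1 by (auto simp: divide_le_eq_1_pos)
      have sp0: "sp \<noteq> 0" using sp1 by simp
      have e1: "(p + sp *\<^sub>R E) - p = sp *\<^sub>R E" by simp
      have e2: "((sp - X) / sp) *\<^sub>R (sp *\<^sub>R E) = (sp - X) *\<^sub>R E" using sp0 by simp
      have "p + ((sp - X) / sp) *\<^sub>R ((p + sp *\<^sub>R E) - p) \<in> closure Om" using seg_cl[OF pcl spcl th] .
      then show ?thesis unfolding eq e1 e2 .
    next
      case False
      have th: "0 \<le> X - sp" "X - sp \<le> 1" using False X by auto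
      have e3: "(X - sp) *\<^sub>R ((p - E) - p) = (sp - X) *\<^sub>R E" by (simp add: algebra_simps)
      have "p + (X - sp) *\<^sub>R ((p - E) - p) \<in> closure Om" using seg_cl[OF pcl mE th] .
      then show ?thesis unfolding eq e3 .
    qed
    show "q - X *\<^sub>R E \<notin> Om \<and> q - X *\<^sub>R E \<in> closure Om" using n c by simp
  qed
  show False
  proof (cases "\<exists>t0>0. q + t0 *\<^sub>R u \<in> Om")
    case True
    then obtain t0 where t0: "t0 > 0" "q + t0 *\<^sub>R u \<in> Om" by blast
    have upq: "\<And>t. t > 0 \<Longrightarrow> q + t *\<^sub>R u \<in> Om"
    proof -
      fix t :: real assume t: "t > 0"
      show "q + t *\<^sub>R u \<in> Om"
      proof (cases "t0 \<le> t")
        case True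
        have "(q + t0 *\<^sub>R u) + (t - t0) *\<^sub>R u \<in> Om" using AC_D[OF u(1) t0(2)] True by simp
        then show ?thesis by (simp add: algebra_simps)
      next
        case False
        have "q + (t / t0) *\<^sub>R ((q + t0 *\<^sub>R u) - q) \<in> Om"
          using shrink[OF t0(2) qcl, of "t / t0"] t t0 False by (simp add: divide_le_eq_1_pos)
        then show ?thesis using t0 by simp
      qed
    qed
    have l: "sp + 1 > 0" using sp1 by simp
    show False using endpoint[OF u one l bot right upq] .
  next
    case False
    then have noup: "\<And>t. t > 0 \<Longrightarrow> q + t *\<^sub>R u \<notin> Om" by blast
    have q1: "\<And>s. 0 \<le> s \<Longrightarrow> s \<le> 1 \<Longrightarrow> q + s *\<^sub>R (- E) \<notin> Om"
      using bot sp1 by simp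
    have q2: "\<And>t. 0 \<le> t \<Longrightarrow> t \<le> 1 \<Longrightarrow> q + t *\<^sub>R u \<notin> Om"
    proof -
      fix t :: real assume "0 \<le> t" "t \<le> 1"
      then show "q + t *\<^sub>R u \<notin> Om" using noup[of t] qn by (cases "t = 0") auto
    qed
    have q3: "q + (- E) + u \<in> Om"
    proof -
      have pu: "p + u \<in> Om" using up[of 1] by simp
      have qu: "q + u \<in> closure Om" using AC_cl[OF u(1) qcl, of 1] by simp
      have th: "0 \<le> (sp - 1) / sp" "(sp - 1) / sp < 1" using sp1 by (auto simp: divide_less_eq_1_pos)
      have sp0: "sp \<noteq> 0" using sp1 by simp
      have e1: "(q + u) - (p + u) = sp *\<^sub>R E" by (simp add: q_def)
      have e2: "((sp - 1) / sp) *\<^sub>R (sp *\<^sub>R E) = (sp - 1) *\<^sub>R E" using sp0 by simp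
      have e3: "(p + u) + (sp - 1) *\<^sub>R E = q + (- E) + u" by (simp add: q_def algebra_simps)
      have "(p + u) + ((sp - 1) / sp) *\<^sub>R ((q + u) - (p + u)) \<in> Om" using seg_Om[OF pu qu th] .
      then show ?thesis unfolding e1 e2 e3 .
    qed
    have sq: "\<And>s t. 0 \<le> s \<Longrightarrow> s \<le> 1 \<Longrightarrow> 0 \<le> t \<Longrightarrow> t \<le> 1 \<Longrightarrow> q + s *\<^sub>R (- E) + t *\<^sub>R u \<in> closure Om"
    proof -
      fix s t :: real assume st: "0 \<le> s" "s \<le> 1" "0 \<le> t" "t \<le> 1"
      have "q - s *\<^sub>R E \<in> closure Om" using bot[of s] st sp1 by simp
      then have "(q - s *\<^sub>R E) + t *\<^sub>R u \<in> closure Om" using AC_cl[OF u(1)] st by simp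
      then show "q + s *\<^sub>R (- E) + t *\<^sub>R u \<in> closure Om" by simp
    qed
    show False using corner[OF u one q1 q2 q3 sq] .
  qed
qed

end

context qh begin

lemma seg_pts:
  assumes ab: "a \<noteq> b" "closed_segment a b \<subseteq> frontier Om"
  obtains m e where "e \<notin> AC" "e \<noteq> 0" "\<And>s. -1 \<le> s \<Longrightarrow> s \<le> 1 \<Longrightarrow> m + s *\<^sub>R e \<in> frontier Om"
proof -
  define m where "m = (1/2) *\<^sub>R (a + b)"
  define e0 where "e0 = (1/2) *\<^sub>R (b - a)"
  have e0: "e0 \<noteq> 0" using ab(1) by (simp add: e0_def)
  have fr0: "\<And>s. -1 \<le> s \<Longrightarrow> s \<le> 1 \<Longrightarrow> m + s *\<^sub>R e0 \<in> frontier Om"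
  proof -
    fix s :: real assume s: "-1 \<le> s" "s \<le> 1"
    have eq: "m + s *\<^sub>R e0 = (1 - (1 + s) / 2) *\<^sub>R a + ((1 + s) / 2) *\<^sub>R b"
      by (simp add: m_def e0_def algebra_simps add_divide_distrib diff_divide_distrib)
    have "m + s *\<^sub>R e0 \<in> closed_segment a b"
      unfolding closed_segment_def mem_Collect_eq
      by (rule exI[where x="(1 + s) / 2"]) (use eq s in simp)
    then show "m + s *\<^sub>R e0 \<in> frontier Om" using ab(2) by blast
  qed
  show ?thesis
  proof (cases "e0 \<in> AC")
    case False
    show ?thesis by (rule that[OF False e0 fr0])
  next
    case True
    have n: "- e0 \<notin> AC" using AC_pointed[OF True] e0 by blast
    have "\<And>s. -1 \<le> s \<Longrightarrow> s \<le> 1 \<Longrightarrow> m + s *\<^sub>R (- e0) \<in> frontier Om"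
    proof -
      fix s :: real assume "-1 \<le> s" "s \<le> 1"
      then have "m + (- s) *\<^sub>R e0 \<in> frontier Om" using fr0[of "- s"] by simp
      then show "m + s *\<^sub>R (- e0) \<in> frontier Om" by simp
    qed
    moreover have "- e0 \<noteq> 0" using e0 by simp
    ultimately show ?thesis using that[OF n] by blast
  qed
qed

lemma step1:
  assumes u: "u \<in> AC" "u \<noteq> 0" and one: "\<And>w. w \<in> AC \<Longrightarrow> \<exists>t\<ge>0. w = t *\<^sub>R u"
    and ab: "a \<noteq> b" "closed_segment a b \<subseteq> frontier Om"
  shows False
proof -
  obtain dl where dl: "dl > 0" "\<And>y w. y \<in> K \<Longrightarrow> y + w \<notin> Om \<Longrightarrow> dl \<le> norm w" using delta by blast
  obtain M where M: "M > 0" "\<And>y w. y \<in> K \<Longrightarrow> y + w \<in> closure Om \<Longrightarrow> y - w \<in> closure Om \<Longrightarrow> norm w \<le> M"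
    using noline_bound by blast
  obtain m e where eAC: "e \<notin> AC" and e0: "e \<noteq> 0" and fr: "\<And>s. -1 \<le> s \<Longrightarrow> s \<le> 1 \<Longrightarrow> m + s *\<^sub>R e \<in> frontier Om"
    using seg_pts[OF ab] by blast
  have frD: "\<And>s. -1 \<le> s \<Longrightarrow> s \<le> 1 \<Longrightarrow> m + s *\<^sub>R e \<in> closure Om \<and> m + s *\<^sub>R e \<notin> Om"
    using fr int_Om by (simp add: frontier_def)
  have mcl: "m \<in> closure Om" and mn: "m \<notin> Om" using frD[of 0] by auto
  obtain x0 where x0: "x0 \<in> Om" using nonempty by blast
  define w0 where "w0 = x0 - m"
  define k where "k n = real n + 3" for n
  have k: "\<And>n. k n \<ge> 3" by (simp add: k_def)
  have kpos: "\<And>n. k n > 0" using k by (smt (verit))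
  define x where "x n = m + (1 / k n) *\<^sub>R w0" for n
  have xin: "\<And>n. x n \<in> Om"
  proof -
    fix n
    have "m + (1 / k n) *\<^sub>R (x0 - m) \<in> Om" using shrink[OF x0 mcl, of "1 / k n"] k[of n] by simp
    then show "x n \<in> Om" by (simp add: x_def w0_def)
  qed
  have tri: "\<And>lam s. 0 \<le> lam \<Longrightarrow> lam < 1 \<Longrightarrow> \<bar>s\<bar> \<le> 1 - lam \<Longrightarrow> m + lam *\<^sub>R w0 + s *\<^sub>R e \<in> closure Om"
  proof -
    fix lam s :: real assume l: "0 \<le> lam" "lam < 1" "\<bar>s\<bar> \<le> 1 - lam"
    define s' where "s' = s / (1 - lam)"
    have lp: "1 - lam > 0" using l by simp
    have ab1: "\<bar>s'\<bar> = \<bar>s\<bar> / (1 - lam)" unfolding s'_def using lp by (simp add: abs_divide)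
    have "\<bar>s\<bar> / (1 - lam) \<le> 1" using l(3) lp by (simp add: divide_le_eq_1_pos)
    then have sa: "\<bar>s'\<bar> \<le> 1" using ab1 by simp
    have s1: "-1 \<le> s'" "s' \<le> 1" using sa by (auto simp: abs_le_iff)
    have c: "m + s' *\<^sub>R e \<in> closure Om" using frD[OF s1] by blast
    have x0c: "x0 \<in> closure Om" using x0 closure_subset by blast
    have "(m + s' *\<^sub>R e) + lam *\<^sub>R (x0 - (m + s' *\<^sub>R e)) \<in> closure Om"
      using seg_cl[OF c x0c] l by simp
    moreover have "(m + s' *\<^sub>R e) + lam *\<^sub>R (x0 - (m + s' *\<^sub>R e)) = m + lam *\<^sub>R w0 + ((1 - lam) * s') *\<^sub>R e"
      unfolding w0_def by (simp add: algebra_simps)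
    moreover have "(1 - lam) * s' = s" using lp by (simp add: s'_def)
    ultimately show "m + lam *\<^sub>R w0 + s *\<^sub>R e \<in> closure Om" by metis
  qed
  obtain T where T: "0 \<le> T" "m + T *\<^sub>R e \<notin> closure Om"
    using L_rec'[OF mcl, of e] eAC by blast
  have Tp: "T > 0"
  proof (rule ccontr)
    assume "\<not> T > 0"
    then have "T = 0" using T(1) by simp
    then show False using T(2) mcl by simp
  qed
  have "m + T *\<^sub>R e \<in> - closure Om" using T(2) by simp
  then obtain eta where eta: "eta > 0" "ball (m + T *\<^sub>R e) eta \<subseteq> - closure Om"
    using open_contains_ball[of "- closure Om"] by blast
  have evT: "eventually (\<lambda>n. x n + T *\<^sub>R e \<notin> Om) sequentially"
    using ev_ge[of "norm w0 / eta"]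
  proof eventually_elim
    case (elim n)
    have "norm ((1 / k n) *\<^sub>R w0) < eta"
    proof -
      have "norm ((1 / k n) *\<^sub>R w0) = norm w0 / k n" using kpos[of n] by simp
      also have "\<dots> < eta"
      proof -
        have "norm w0 / eta < k n" using elim by (simp add: k_def)
        then have "norm w0 < k n * eta" using eta by (simp add: divide_less_eq)
        then show ?thesis using kpos[of n] by (simp add: divide_less_eq mult.commute)
      qed
      finally show ?thesis .
    qed
    then have "x n + T *\<^sub>R e \<in> ball (m + T *\<^sub>R e) eta"
      by (simp add: x_def dist_norm algebra_simps)
    then show ?case using eta(2) closure_subset by blast
  qed
  obtain y Li where y: "\<And>n. y n \<in> K" and Li: "\<And>n. linear (Li n)"
    and m1: "\<And>n w. x n + w \<in> Om \<longleftrightarrow> y n + Li n w \<in> Om"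
    and m2: "\<And>n w. x n + w \<in> closure Om \<longleftrightarrow> y n + Li n w \<in> closure Om"
    and m3: "\<And>n w. w \<in> AC \<Longrightarrow> Li n w \<in> AC"
    using pull_seq[where x=x, OF xin] by blast
  have yOm: "\<And>n. y n \<in> Om" using y KOm by blast
  define W where "W n = (1 / k n) *\<^sub>R Li n w0" for n
  define En where "En n = Li n e" for n
  have Qeq: "\<And>n a b. y n + a *\<^sub>R W n + b *\<^sub>R En n = y n + Li n ((a / k n) *\<^sub>R w0 + b *\<^sub>R e)"
  proof -
    fix n a b
    have "Li n ((a / k n) *\<^sub>R w0 + b *\<^sub>R e) = (a / k n) *\<^sub>R Li n w0 + b *\<^sub>R Li n e"
      using linear_add[OF Li[of n]] linear_scale[OF Li[of n]] by simp
    then show "y n + a *\<^sub>R W n + b *\<^sub>R En n = y n + Li n ((a / k n) *\<^sub>R w0 + b *\<^sub>R e)"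
      by (simp add: W_def En_def add.assoc)
  qed
  have Xeq: "\<And>n a b. x n + ((a / k n) *\<^sub>R w0 + b *\<^sub>R e) = m + ((a + 1) / k n) *\<^sub>R w0 + b *\<^sub>R e"
  proof -
    fix n a b
    have "x n + ((a / k n) *\<^sub>R w0 + b *\<^sub>R e) = m + (1 / k n + a / k n) *\<^sub>R w0 + b *\<^sub>R e"
      by (simp add: x_def scaleR_add_left algebra_simps)
    also have "1 / k n + a / k n = (a + 1) / k n" by (simp add: add_divide_distrib)
    finally show "x n + ((a / k n) *\<^sub>R w0 + b *\<^sub>R e) = m + ((a + 1) / k n) *\<^sub>R w0 + b *\<^sub>R e" .
  qed
  have Q1: "\<And>n a b. y n + a *\<^sub>R W n + b *\<^sub>R En n \<in> Om \<longleftrightarrow> m + ((a + 1) / k n) *\<^sub>R w0 + b *\<^sub>R e \<in> Om"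
    by (simp only: Qeq m1[symmetric] Xeq)
  have Q2: "\<And>n a b. y n + a *\<^sub>R W n + b *\<^sub>R En n \<in> closure Om \<longleftrightarrow> m + ((a + 1) / k n) *\<^sub>R w0 + b *\<^sub>R e \<in> closure Om"
    by (simp only: Qeq m2[symmetric] Xeq)
  have W1: "\<And>n. dl \<le> norm (W n)"
  proof -
    fix n
    have "m + ((-1 + 1) / k n) *\<^sub>R w0 + 0 *\<^sub>R e \<notin> Om" using mn by simp
    then have "y n + (-1) *\<^sub>R W n + 0 *\<^sub>R En n \<notin> Om" using Q1[of n "-1" 0] by blast
    then show "dl \<le> norm (W n)" using dl(2)[OF y[of n], of "- W n"] by simp
  qed
  have WM: "\<And>n. norm (W n) \<le> M"
  proof -
    fix n
    have "m + ((1 + 1) / k n) *\<^sub>R w0 + 0 *\<^sub>R e \<in> closure Om"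
      using tri[of "2 / k n" 0] k[of n] kpos[of n] by (simp add: divide_less_eq_1_pos)
    then have "y n + 1 *\<^sub>R W n + 0 *\<^sub>R En n \<in> closure Om" using Q2[of n 1 0] by blast
    then have a: "y n + W n \<in> closure Om" by simp
    have "m + ((-1 + 1) / k n) *\<^sub>R w0 + 0 *\<^sub>R e \<in> closure Om" using mcl by simp
    then have "y n + (-1) *\<^sub>R W n + 0 *\<^sub>R En n \<in> closure Om" using Q2[of n "-1" 0] by blast
    then have b: "y n - W n \<in> closure Om" by simp
    show "norm (W n) \<le> M" using M(2)[OF y a b] .
  qed
  have EM: "\<And>n. norm (En n) \<le> 2 * M"
  proof -
    fix n
    have l1: "1 / k n < 1" "0 \<le> 1 / k n" "\<bar>1/2\<bar> \<le> 1 - 1 / k n" "\<bar>-1/2\<bar> \<le> 1 - 1 / k n"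
      using k[of n] kpos[of n] by (auto simp: divide_le_eq)
    have "m + ((0 + 1) / k n) *\<^sub>R w0 + (1/2) *\<^sub>R e \<in> closure Om" using tri[OF l1(2) l1(1) l1(3)] by simp
    then have "y n + 0 *\<^sub>R W n + (1/2) *\<^sub>R En n \<in> closure Om" using Q2[of n 0 "1/2"] by blast
    then have a: "y n + (1/2) *\<^sub>R En n \<in> closure Om" by simp
    have "m + ((0 + 1) / k n) *\<^sub>R w0 + (-1/2) *\<^sub>R e \<in> closure Om" using tri[OF l1(2) l1(1) l1(4)] by simp
    then have "y n + 0 *\<^sub>R W n + (-1/2) *\<^sub>R En n \<in> closure Om" using Q2[of n 0 "-1/2"] by blast
    then have b: "y n - (1/2) *\<^sub>R En n \<in> closure Om" by simp
    have "norm ((1/2) *\<^sub>R En n) \<le> M" using M(2)[OF y a b] .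
    then show "norm (En n) \<le> 2 * M" by simp
  qed
  have E1: "eventually (\<lambda>n. dl / T \<le> norm (En n)) sequentially"
    using evT
  proof eventually_elim
    case (elim n)
    have "m + ((0 + 1) / k n) *\<^sub>R w0 + T *\<^sub>R e \<notin> Om" using elim by (simp add: x_def)
    then have "y n + 0 *\<^sub>R W n + T *\<^sub>R En n \<notin> Om" using Q1[of n 0 T] by blast
    then have "y n + T *\<^sub>R En n \<notin> Om" by simp
    then have "dl \<le> norm (T *\<^sub>R En n)" by (rule dl(2)[OF y[of n]])
    then have "dl \<le> T * norm (En n)" using Tp by simp
    then show ?case using Tp by (simp add: divide_le_eq mult.commute)
  qed
  have bseg: "\<And>n s. -1 \<le> s \<Longrightarrow> s \<le> 1 \<Longrightarrow> y n + (-1) *\<^sub>R W n + s *\<^sub>R En n \<notin> Om"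
  proof -
    fix n :: nat and s :: real assume s: "-1 \<le> s" "s \<le> 1"
    have "m + ((-1 + 1) / k n) *\<^sub>R w0 + s *\<^sub>R e \<notin> Om" using frD[OF s] by simp
    then show "y n + (-1) *\<^sub>R W n + s *\<^sub>R En n \<notin> Om" using Q1[of n "-1" s] by blast
  qed
  have trev: "\<And>tau s. -1 \<le> tau \<Longrightarrow> \<bar>s\<bar> \<le> 1/2 \<Longrightarrow> eventually (\<lambda>n. y n + tau *\<^sub>R W n + s *\<^sub>R En n \<in> closure Om) sequentially"
  proof -
    fix tau s :: real assume ts: "-1 \<le> tau" "\<bar>s\<bar> \<le> 1/2"
    show "eventually (\<lambda>n. y n + tau *\<^sub>R W n + s *\<^sub>R En n \<in> closure Om) sequentially"
      using ev_ge[of "2 * (tau + 1)"]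
    proof eventually_elim
      case (elim n)
      have kk: "2 * (tau + 1) \<le> k n" using elim by (simp add: k_def)
      have l0: "0 \<le> (tau + 1) / k n" using ts kpos[of n] by simp
      have l1: "(tau + 1) / k n \<le> 1/2" using kk kpos[of n] by (simp add: divide_le_eq)
      have l2: "(tau + 1) / k n < 1" using l1 by linarith
      have l3: "\<bar>s\<bar> \<le> 1 - (tau + 1) / k n" using l1 ts(2) by linarith
      have "m + ((tau + 1) / k n) *\<^sub>R w0 + s *\<^sub>R e \<in> closure Om"
        by (rule tri[OF l0 l2 l3])
      then show ?case using Q2[of n tau s] by blast
    qed
  qed
  have ev1: "eventually (\<lambda>n. y n \<in> K) sequentially" by (intro always_eventually allI y)
  have ev2: "eventually (\<lambda>n. W n \<in> cball 0 M) sequentially" by (intro always_eventually allI) (simp add: WM)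
  have ev3: "eventually (\<lambda>n. En n \<in> cball 0 (2 * M)) sequentially" by (intro always_eventually allI) (simp add: EM)
  obtain ph y0 W0 E0 where X: "strict_mono ph" "y0 \<in> K" "W0 \<in> cball 0 M" "E0 \<in> cball 0 (2 * M)"
    "(\<lambda>n. y (ph n)) \<longlonglongrightarrow> y0" "(\<lambda>n. W (ph n)) \<longlonglongrightarrow> W0" "(\<lambda>n. En (ph n)) \<longlonglongrightarrow> E0"
    using extract3[OF cK compact_cball[of 0 M] compact_cball[of 0 "2 * M"] ev1 ev2 ev3] by blast
  have y0: "y0 \<in> Om" using X(2) KOm by blast
  have W0d: "dl \<le> norm W0" by (rule norm_lim_ge[OF X(6)]) (intro always_eventually allI W1)
  have E0d: "dl / T \<le> norm E0" by (rule norm_lim_ge[OF X(7) ev_subseq[OF X(1) E1]])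
  have "dl / T > 0" using dl(1) Tp by simp
  then have E0nz: "E0 \<noteq> 0" using E0d by auto
  have trinf: "\<And>tau s. -1 \<le> tau \<Longrightarrow> \<bar>s\<bar> \<le> 1/2 \<Longrightarrow> y0 + tau *\<^sub>R W0 + s *\<^sub>R E0 \<in> closure Om"
  proof -
    fix tau s :: real assume ts: "-1 \<le> tau" "\<bar>s\<bar> \<le> 1/2"
    show "y0 + tau *\<^sub>R W0 + s *\<^sub>R E0 \<in> closure Om"
      by (rule lim_cl[OF _ ev_subseq[OF X(1) trev[OF ts]]]) (intro tendsto_intros X)
  qed
  have bsinf: "\<And>s. -1 \<le> s \<Longrightarrow> s \<le> 1 \<Longrightarrow> y0 + (-1) *\<^sub>R W0 + s *\<^sub>R E0 \<notin> Om"
  proof -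
    fix s :: real assume s: "-1 \<le> s" "s \<le> 1"
    have lim: "(\<lambda>n. y (ph n) + (-1) *\<^sub>R W (ph n) + s *\<^sub>R En (ph n)) \<longlonglongrightarrow> y0 + (-1) *\<^sub>R W0 + s *\<^sub>R E0"
      by (intro tendsto_intros X)
    have ev: "eventually (\<lambda>n. y (ph n) + (-1) *\<^sub>R W (ph n) + s *\<^sub>R En (ph n) \<notin> Om) sequentially"
      by (intro always_eventually allI bseg s)
    show "y0 + (-1) *\<^sub>R W0 + s *\<^sub>R E0 \<notin> Om" by (rule lim_notin[OF lim ev])
  qed
  have W0AC: "W0 \<in> AC"
  proof (rule L_rec[OF y0])
    fix t :: real assume t: "0 \<le> t"
    show "y0 + t *\<^sub>R W0 \<in> closure Om" using trinf[of t 0] t by simp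
  qed
  obtain mu where mu: "mu \<ge> 0" "W0 = mu *\<^sub>R u" using one[OF W0AC] by blast
  have mup: "mu > 0"
  proof (rule ccontr)
    assume "\<not> mu > 0"
    then have "mu = 0" using mu(1) by simp
    then show False using W0d dl(1) mu(2) by simp
  qed
  define p where "p = y0 - W0"
  define E' where "E' = (1/2) *\<^sub>R E0"
  have pcl: "p \<in> closure Om" using trinf[of "-1" 0] by (simp add: p_def)
  have pn: "p \<notin> Om" using bsinf[of 0] by (simp add: p_def)
  have pE: "p + E' \<in> closure Om" using trinf[of "-1" "1/2"] by (simp add: p_def E'_def algebra_simps)
  have mE: "p - E' \<in> closure Om" using trinf[of "-1" "-1/2"] by (simp add: p_def E'_def algebra_simps)
  have py0: "p + mu *\<^sub>R u = y0" by (simp add: p_def mu(2))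
  have up: "\<And>t. t > 0 \<Longrightarrow> p + t *\<^sub>R u \<in> Om"
  proof -
    fix t :: real assume t: "t > 0"
    show "p + t *\<^sub>R u \<in> Om"
    proof (cases "mu \<le> t")
      case True
      have "y0 + (t - mu) *\<^sub>R u \<in> Om" using AC_D[OF u(1) y0] True by simp
      moreover have "y0 + (t - mu) *\<^sub>R u = p + t *\<^sub>R u" using py0[symmetric] by (simp add: algebra_simps)
      ultimately show ?thesis by simp
    next
      case False
      have "p + (t / mu) *\<^sub>R (y0 - p) \<in> Om"
        using shrink[OF y0 pcl, of "t / mu"] t mup False by (simp add: divide_le_eq_1_pos)
      moreover have "(t / mu) *\<^sub>R (y0 - p) = t *\<^sub>R u" using mup by (simp add: p_def mu(2))
      ultimately show ?thesis by simp
    qed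
  qed
  have nm: "\<And>c. E' \<noteq> c *\<^sub>R u"
  proof
    fix c assume Ec: "E' = c *\<^sub>R u"
    have c0: "c \<noteq> 0" using Ec E0nz by (auto simp: E'_def)
    define d where "d = \<bar>c\<bar>"
    have dp: "d > 0" using c0 by (simp add: d_def)
    have pd: "p - d *\<^sub>R u \<in> closure Om"
    proof (cases "c > 0")
      case True
      then have "p - E' = p - d *\<^sub>R u" using Ec by (simp add: d_def)
      then show ?thesis using mE by simp
    next
      case False
      then have "p + E' = p - d *\<^sub>R u" using Ec c0 by (simp add: d_def)
      then show ?thesis using pE by simp
    qed
    have th: "0 \<le> mu / (mu + d)" "mu / (mu + d) < 1" using mup dp by (auto simp: divide_less_eq_1_pos)
    have "y0 + (mu / (mu + d)) *\<^sub>R ((p - d *\<^sub>R u) - y0) \<in> Om" using seg_Om[OF y0 pd th] .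
    moreover have "y0 + (mu / (mu + d)) *\<^sub>R ((p - d *\<^sub>R u) - y0) = p"
    proof -
      have "(p - d *\<^sub>R u) - y0 = (- (mu + d)) *\<^sub>R u" using py0[symmetric] by (simp add: algebra_simps)
      then have "(mu / (mu + d)) *\<^sub>R ((p - d *\<^sub>R u) - y0) = ((mu / (mu + d)) * (- (mu + d))) *\<^sub>R u" by simp
      also have "(mu / (mu + d)) * (- (mu + d)) = - mu" using mup dp by (simp add: field_simps)
      finally have f: "(mu / (mu + d)) *\<^sub>R ((p - d *\<^sub>R u) - y0) = (- mu) *\<^sub>R u" .
      have "y0 + (- mu) *\<^sub>R u = (p + mu *\<^sub>R u) + (- mu) *\<^sub>R u" using py0 by simp
      also have "\<dots> = p" by simp
      finally show ?thesis unfolding f .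
    qed
    ultimately show False using pn by simp
  qed
  show False using step2[OF u one pcl pn pE mE nm up] .
qed

end


lemma (in qh) dim_one_iff:
  "dim AC = 1 \<longleftrightarrow> (\<exists>u\<in>AC. u \<noteq> 0 \<and> (\<forall>w\<in>AC. \<exists>t\<ge>0. w = t *\<^sub>R u))"
proof
  assume d: "dim AC = 1"
  have "\<not> AC \<subseteq> {0}" using d dim_eq_0[of AC] by auto
  then obtain u where u: "u \<in> AC" "u \<noteq> 0" by blast
  have "\<forall>w\<in>AC. \<exists>t\<ge>0. w = t *\<^sub>R u"
  proof
    fix w assume w: "w \<in> AC"
    have "w \<in> span {u}"
    proof (rule ccontr)
      assume nw: "w \<notin> span {u}"
      have "dim (insert w {u}) = dim {u} + 1" using nw dim_insert[of w "{u}"] by simp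
      also have "dim {u} = 1" using u(2) by simp
      finally have "dim (insert w {u}) = 2" by simp
      moreover have "dim (insert w {u}) \<le> dim AC" using w u(1) by (intro dim_subset) auto
      ultimately show False using d by simp
    qed
    then obtain c where c: "w = c *\<^sub>R u" by (auto simp: span_singleton)
    have "c \<ge> 0"
    proof (rule ccontr)
      assume "\<not> c \<ge> 0"
      then have cn: "c < 0" by simp
      have nn: "0 \<le> - 1 / c" by (rule divide_nonpos_neg) (use cn in auto)
      have "(- 1 / c) *\<^sub>R w \<in> AC" by (rule AC_scale[OF w nn])
      moreover have "(- 1 / c) *\<^sub>R w = - u" using c cn by simp
      ultimately have "- u \<in> AC" by simp
      then show False using AC_pointed[OF u(1)] u(2) by blast
    qed
    then show "\<exists>t\<ge>0. w = t *\<^sub>R u" using c by blast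
  qed
  then show "\<exists>u\<in>AC. u \<noteq> 0 \<and> (\<forall>w\<in>AC. \<exists>t\<ge>0. w = t *\<^sub>R u)" using u by blast
next
  assume "\<exists>u\<in>AC. u \<noteq> 0 \<and> (\<forall>w\<in>AC. \<exists>t\<ge>0. w = t *\<^sub>R u)"
  then obtain u where u: "u \<in> AC" "u \<noteq> 0" and one: "\<forall>w\<in>AC. \<exists>t\<ge>0. w = t *\<^sub>R u" by blast
  have sub: "AC \<subseteq> span {u}"
  proof
    fix w assume "w \<in> AC"
    then obtain t where "w = t *\<^sub>R u" using one by blast
    then show "w \<in> span {u}" by (simp add: span_mul span_base)
  qed
  have "dim AC \<le> dim (span {u})" using sub by (rule dim_subset)
  also have "\<dots> = 1" using u(2) by (simp add: dim_span)
  finally have le: "dim AC \<le> 1" .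
  have nz: "dim AC \<noteq> 0" using u dim_eq_0[of AC] by auto
  show "dim AC = 1" using le nz by arith
qed

theorem proposition5p5:
  fixes \<Omega> :: "'a::euclidean_space set"
  assumes "affine_domain \<Omega>" and "quasi_homogeneous \<Omega>" and "properly_convex \<Omega>"
  shows "strictly_convex \<Omega> \<longleftrightarrow> dim (asymptotic_cone \<Omega>) = 1"
proof -
  obtain K G where K: "compact K" "K \<subseteq> \<Omega>" and G: "aff_subgroup G \<Omega>" and cov: "(\<Union>g\<in>G. g ` K) = \<Omega>"
    using assms(2) unfolding quasi_homogeneous_def by blast
  have op: "open \<Omega>" and ne: "\<Omega> \<noteq> {}" using assms(1) unfolding affine_domain_def by auto
  have cv: "convex \<Omega>" and nl: "\<not> (\<exists>x v. v \<noteq> 0 \<and> (\<forall>t::real. x + t *\<^sub>R v \<in> \<Omega>))"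
    using assms(3) unfolding properly_convex_def by auto
  have GA: "G \<subseteq> Aut_aff \<Omega>" using G unfolding aff_subgroup_def by blast
  interpret Q: qh \<Omega> K G
  proof
    show "open \<Omega>" by (rule op)
    show "convex \<Omega>" by (rule cv)
    show "\<Omega> \<noteq> {}" by (rule ne)
    show "\<And>x v. v \<noteq> 0 \<Longrightarrow> \<exists>t. x + t *\<^sub>R v \<notin> \<Omega>" using nl by blast
    show "compact K" by (rule K(1))
    show "K \<subseteq> \<Omega>" by (rule K(2))
    show "G \<subseteq> Aut_aff \<Omega>" by (rule GA)
    show "\<And>x. x \<in> \<Omega> \<Longrightarrow> \<exists>g\<in>G. \<exists>y\<in>K. x = g y"
    proof -
      fix x assume "x \<in> \<Omega>"
      then have "x \<in> (\<Union>g\<in>G. g ` K)" using cov by simp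
      then show "\<exists>g\<in>G. \<exists>y\<in>K. x = g y" by blast
    qed
  qed
  show ?thesis
  proof
    assume sc: "strictly_convex \<Omega>"
    have nseg: "\<not> (\<exists>a b. a \<noteq> b \<and> closed_segment a b \<subseteq> frontier \<Omega>)"
      using sc unfolding strictly_convex_def by blast
    obtain d where d: "d \<in> asymptotic_cone \<Omega>" "d \<noteq> 0" using Q.AC_nonzero by blast
    have "\<forall>w\<in>asymptotic_cone \<Omega>. \<exists>t\<ge>0. w = t *\<^sub>R d"
    proof
      fix w assume w: "w \<in> asymptotic_cone \<Omega>"
      have "\<exists>c. w = c *\<^sub>R d"
      proof (rule ccontr)
        assume "\<not> (\<exists>c. w = c *\<^sub>R d)"
        then have nm: "\<And>c. w \<noteq> c *\<^sub>R d" by blast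
        show False using Q.fwd_core[OF d w nm] nseg by blast
      qed
      then obtain c where c: "w = c *\<^sub>R d" by blast
      have "c \<ge> 0"
      proof (rule ccontr)
        assume "\<not> c \<ge> 0"
        then have cn: "c < 0" by simp
        have nn: "0 \<le> - 1 / c" by (rule divide_nonpos_neg) (use cn in auto)
        have "(- 1 / c) *\<^sub>R w \<in> asymptotic_cone \<Omega>" by (rule Q.AC_scale[OF w nn])
        moreover have "(- 1 / c) *\<^sub>R w = - d" using c cn by simp
        ultimately have "- d \<in> asymptotic_cone \<Omega>" by simp
        then show False using Q.AC_pointed[OF d(1)] d(2) by blast
      qed
      then show "\<exists>t\<ge>0. w = t *\<^sub>R d" using c by blast
    qed
    then show "dim (asymptotic_cone \<Omega>) = 1" using Q.dim_one_iff d by blast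
  next
    assume "dim (asymptotic_cone \<Omega>) = 1"
    then obtain u where u: "u \<in> asymptotic_cone \<Omega>" "u \<noteq> 0"
      and one: "\<forall>w\<in>asymptotic_cone \<Omega>. \<exists>t\<ge>0. w = t *\<^sub>R u"
      using Q.dim_one_iff by blast
    have one': "\<And>w. w \<in> asymptotic_cone \<Omega> \<Longrightarrow> \<exists>t\<ge>0. w = t *\<^sub>R u" using one by blast
    have "\<not> (\<exists>a b. a \<noteq> b \<and> closed_segment a b \<subseteq> frontier \<Omega>)"
    proof
      assume "\<exists>a b. a \<noteq> b \<and> closed_segment a b \<subseteq> frontier \<Omega>"
      then obtain a b where ab: "a \<noteq> b" "closed_segment a b \<subseteq> frontier \<Omega>" by blast
      show False using Q.step1[OF u one' ab] .
    qed
    then show "strictly_convex \<Omega>" unfolding strictly_convex_def using cv by blast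
  qed
qed

end
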